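(* Let $\Omega\subset\mathbb{R}^N$ be an open domain, assume $C_b^\infty(\mathbb{R}^N)\subset\mathcal{X}$, let $g\in\overline{\mathcal{X}}$, and for each $\rho>0$ let $\mathcal{A}_\rho:\Omega\times\mathcal{X}\times\mathbb{R}\to\mathbb{R}$ satisfy assumptions (a), (b), (c) below. Assume the scheme is consistent and weakly stable, with $\{u_\rho\}_{\rho>0}$ the uniformly bounded family of viscosity solutions of the DPP given by weak stability. Assume moreover the strong uniqueness property: whenever $u$ is an upper semicontinuous viscosity subsolution and $v$ is a lower semicontinuous viscosity supersolution of the problem $F(x,u,\nabla u,D^2u)=0$ in $\Omega$, $u=g$ on $\partial\Omega$, then $u\le v$ in $\overline\Omega$. Then, as $\rho\to0^+$, $u_\rho$ converges locally uniformly to the unique viscosity solution of this boundary value problem.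
   Context: $\overline{\mathcal{X}}$ is the set of bounded functions $\mathbb{R}^N\to\mathbb{R}$, $\mathcal{X}\subset\overline{\mathcal{X}}$ a fixed subset. Assumptions on each $\mathcal{A}_\rho$: (a) $\varphi_1\le\varphi_2$ implies $\mathcal{A}_\rho(x,\varphi_2,s)\le\mathcal{A}_\rho(x,\varphi_1,s)$; (b) $s_1\le s_2$ implies $\mathcal{A}_\rho(x,\varphi,s_1)\le\mathcal{A}_\rho(x,\varphi,s_2)$; (c) for each $(x,\varphi)$, $s\mapsto\mathcal{A}_\rho(x,\varphi,s)$ has exactly one zero. DPP: $\mathcal{A}_\rho(x,u,u(x))=0$ for $x\in\Omega$, $u=g$ on $\mathbb{R}^N\setminus\Omega$. A viscosity supersolution of the DPP is $u\in\overline{\mathcal{X}}$ with $u\ge g$ on $\mathbb{R}^N\setminus\Omega$ and, for each $x\in\Omega$, $\mathcal{A}_\rho(x,\varphi,u(x))\ge0$ for all $\varphi\in\mathcal{X}$ with $\varphi\le u$; a viscosity subsolution is $u\in\overline{\mathcal{X}}$ with $u\le g$ on $\mathbb{R}^N\setminus\Omega$ and, for each $x\in\Omega$, $\mathcal{A}_\rho(x,\varphi,u(x))\le0$ for all $\varphi\in\mathcal{X}$ with $\varphi\ge u$; a viscosity solution is both. $\mathcal{B}_\rho(x,\varphi,s):=\mathcal{A}_\rho(x,\varphi,s)$ for $x\in\Omega$ and $:=s-g(x)$ for $x\in\mathbb{R}^N\setminus\Omega$. $F:\Omega\times\mathbb{R}\times\mathbb{R}^N\times S^N\to\mathbb{R}$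 is proper (nondecreasing in the second variable) and elliptic ($F(x,s,p,\overline M)\le F(x,s,p,\underline M)$ whenever $\overline M\ge\underline M$). For a function $z$ on a set $C$, $z^*(x)=\limsup_{y\to x,\,y\in C}z(y)$, $z_*(x)=\liminf_{y\to x,\,y\in C}z(y)$ (for $F$ in all variables, defined for $x\in\overline\Omega$). Consistency: for all $x\in\overline\Omega$ and $\varphi\in C_b^\infty(\mathbb{R}^N)$ there is a positive modulus $\omega$ (continuous, strictly increasing, $\omega(0)=0$) with $\limsup_{\rho\to0^+,y\to x,\xi\to0}\mathcal{B}_\rho(y,\varphi+\xi,\varphi(y)+\xi+\omega(\rho))\le F^*(x,\varphi(x),\nabla\varphi(x),D^2\varphi(x))$ if $x\in\Omega$, $\le\max\{\varphi(x)-g_*(x),F^*(\cdot)\}$ if $x\in\partial\Omega$; and $\liminf_{\rho\to0^+,y\to x,\xi\to0}\mathcal{B}_\rho(y,\varphi+\xi,\varphi(y)+\xi-\omega(\rho))\ge F_*(x,\varphi(x),\nabla\varphi(x),D^2\varphi(x))$ if $x\in\Omega$, $\ge\min\{\varphi(x)-g^*(x),F_*(\cdot)\}$ if $x\in\partial\Omega$ (with the same arguments of $F^*,F_*$). Weak stability: for every $\rho>0$ there exists a viscosity solution $u_\rho\in\overline{\mathcal{X}}$ of the DPP, with $\sup|u_\rho|$ bounded independently of $\rho$. Viscosity solutions of the PDE problem: $u\in\overline{\mathcal{X}}$ is a viscosity subsolution if for all $\varphi\in C_b^\infty(\mathbb{R}^N)$ and $x\in\overline\Omega$ where $u^*-\varphi$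 attains its global maximum over $\overline\Omega$: $F_*(x,u^*(x),\nabla\varphi(x),D^2\varphi(x))\le0$ if $x\in\Omega$, and $\min\{u^*(x)-g^*(x),F_*(x,u^*(x),\nabla\varphi(x),D^2\varphi(x))\}\le0$ if $x\in\partial\Omega$. It is a supersolution if for all such $\varphi$ and $x\in\overline\Omega$ where $u_*-\varphi$ attains its global minimum: $F^*(x,u_*(x),\nabla\varphi(x),D^2\varphi(x))\ge0$ if $x\in\Omega$, and $\max\{u_*(x)-g_*(x),F^*(x,u_*(x),\nabla\varphi(x),D^2\varphi(x))\}\ge0$ if $x\in\partial\Omega$. A viscosity solution is both. *)

theory Defs
  imports "HOL-Analysis.Analysis" "HOL-Library.Liminf_Limsup"
begin

text \<open>Points of R^N are vectors real^'n (N = CARD('n)).\<close>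

definition partial_deriv :: "'n::finite \<Rightarrow> (real^'n \<Rightarrow> real) \<Rightarrow> real^'n \<Rightarrow> real" where
  "partial_deriv i f x = frechet_derivative f (at x) (axis i 1)"

definition grad :: "(real^'n::finite \<Rightarrow> real) \<Rightarrow> real^'n \<Rightarrow> real^'n" where
  "grad f x = (\<chi> i. partial_deriv i f x)"

definition hess :: "(real^'n::finite \<Rightarrow> real) \<Rightarrow> real^'n \<Rightarrow> real^'n^'n" where
  "hess f x = (\<chi> i j. partial_deriv j (partial_deriv i f) x)"

fun Cbk :: "nat \<Rightarrow> (real^'n::finite \<Rightarrow> real) \<Rightarrow> bool" where
  "Cbk 0 f = (continuous_on UNIV f \<and> bounded (range f))"
| "Cbk (Suc k) f = (continuous_on UNIV f \<and> bounded (range f) \<and> f differentiable_on UNIV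
                    \<and> (\<forall>i. Cbk k (partial_deriv i f)))"

definition Cb_inf :: "(real^'n::finite \<Rightarrow> real) set" where
  "Cb_inf = {f. \<forall>k. Cbk k f}"

definition Xbar :: "(real^'n::finite \<Rightarrow> real) set" where
  "Xbar = {u. bounded (range u)}"

definition Sym :: "(real^'n::finite^'n) set" where
  "Sym = {M. transpose M = M}"

definition mat_ge :: "real^'n::finite^'n \<Rightarrow> real^'n^'n \<Rightarrow> bool" where
  "mat_ge A B = (\<forall>\<xi>. \<xi> \<bullet> ((A - B) *v \<xi>) \<ge> 0)"

definition proper_F :: "(real^'n::finite) set \<Rightarrow> (real^'n \<Rightarrow> real \<Rightarrow> real^'n \<Rightarrow> real^'n^'n \<Rightarrow> real) \<Rightarrow> bool" where
  "proper_F \<Omega> F = (\<forall>x\<in>\<Omega>. \<forall>s1 s2 p M. M \<in> Sym \<and> s1 \<le> s2 \<longrightarrow> F x s1 p M \<le> F x s2 p M)"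

definition elliptic_F :: "(real^'n::finite) set \<Rightarrow> (real^'n \<Rightarrow> real \<Rightarrow> real^'n \<Rightarrow> real^'n^'n \<Rightarrow> real) \<Rightarrow> bool" where
  "elliptic_F \<Omega> F = (\<forall>x\<in>\<Omega>. \<forall>s p M1 M2. M1 \<in> Sym \<and> M2 \<in> Sym \<and> mat_ge M1 M2
       \<longrightarrow> F x s p M1 \<le> F x s p M2)"

definition usc_env :: "'a::topological_space set \<Rightarrow> ('a \<Rightarrow> real) \<Rightarrow> 'a \<Rightarrow> ereal" where
  "usc_env C z x = Limsup (inf (nhds x) (principal C)) (\<lambda>y. ereal (z y))"

definition lsc_env :: "'a::topological_space set \<Rightarrow> ('a \<Rightarrow> real) \<Rightarrow> 'a \<Rightarrow> ereal" where
  "lsc_env C z x = Liminf (inf (nhds x) (principal C)) (\<lambda>y. ereal (z y))"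

definition F_upper :: "(real^'n::finite) set \<Rightarrow> (real^'n \<Rightarrow> real \<Rightarrow> real^'n \<Rightarrow> real^'n^'n \<Rightarrow> real)
    \<Rightarrow> real^'n \<Rightarrow> real \<Rightarrow> real^'n \<Rightarrow> real^'n^'n \<Rightarrow> ereal" where
  "F_upper \<Omega> F x s p M = usc_env (\<Omega> \<times> UNIV \<times> UNIV \<times> Sym) (\<lambda>(y,t,q,N). F y t q N) (x,s,p,M)"

definition F_lower :: "(real^'n::finite) set \<Rightarrow> (real^'n \<Rightarrow> real \<Rightarrow> real^'n \<Rightarrow> real^'n^'n \<Rightarrow> real)
    \<Rightarrow> real^'n \<Rightarrow> real \<Rightarrow> real^'n \<Rightarrow> real^'n^'n \<Rightarrow> ereal" where
  "F_lower \<Omega> F x s p M = lsc_env (\<Omega> \<times> UNIV \<times> UNIV \<times> Sym) (\<lambda>(y,t,q,N). F y t q N) (x,s,p,M)"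

text \<open>Assumptions (a), (b), (c) on the operators A_\<rho> : \<Omega> \<times> X \<times> R \<rightarrow> R.\<close>
definition scheme_assms :: "(real^'n::finite) set \<Rightarrow> (real^'n \<Rightarrow> real) set
    \<Rightarrow> (real \<Rightarrow> real^'n \<Rightarrow> (real^'n \<Rightarrow> real) \<Rightarrow> real \<Rightarrow> real) \<Rightarrow> bool" where
  "scheme_assms \<Omega> X A =
    (\<forall>\<rho>>0. \<forall>x\<in>\<Omega>.
      (\<forall>\<phi>1\<in>X. \<forall>\<phi>2\<in>X. \<forall>s. \<phi>1 \<le> \<phi>2 \<longrightarrow> A \<rho> x \<phi>2 s \<le> A \<rho> x \<phi>1 s) \<and>
      (\<forall>\<phi>\<in>X. \<forall>s1 s2. s1 \<le> s2 \<longrightarrow> A \<rho> x \<phi> s1 \<le> A \<rho> x \<phi> s2) \<and>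
      (\<forall>\<phi>\<in>X. \<exists>!s. A \<rho> x \<phi> s = 0))"

definition dpp_supersol where
  "dpp_supersol \<Omega> X A g \<rho> (u :: real^'n::finite \<Rightarrow> real) =
    (u \<in> Xbar \<and> (\<forall>x. x \<notin> \<Omega> \<longrightarrow> u x \<ge> g x) \<and>
     (\<forall>x\<in>\<Omega>. \<forall>\<phi>\<in>X. \<phi> \<le> u \<longrightarrow> A \<rho> x \<phi> (u x) \<ge> 0))"

definition dpp_subsol where
  "dpp_subsol \<Omega> X A g \<rho> (u :: real^'n::finite \<Rightarrow> real) =
    (u \<in> Xbar \<and> (\<forall>x. x \<notin> \<Omega> \<longrightarrow> u x \<le> g x) \<and>
     (\<forall>x\<in>\<Omega>. \<forall>\<phi>\<in>X. \<phi> \<ge> u \<longrightarrow> A \<rho> x \<phi> (u x) \<le> 0))"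

definition dpp_sol where
  "dpp_sol \<Omega> X A g \<rho> u = (dpp_supersol \<Omega> X A g \<rho> u \<and> dpp_subsol \<Omega> X A g \<rho> u)"

definition B_op where
  "B_op \<Omega> A (g :: real^'n::finite \<Rightarrow> real) \<rho> x \<phi> s = (if x \<in> \<Omega> then A \<rho> x \<phi> s else s - g x)"

definition positive_modulus :: "(real \<Rightarrow> real) \<Rightarrow> bool" where
  "positive_modulus \<omega> = (continuous_on {0..} \<omega> \<and> strict_mono_on {0..} \<omega> \<and> \<omega> 0 = 0)"

definition consistent where
  "consistent \<Omega> A (g :: real^'n::finite \<Rightarrow> real) F =
    (\<forall>x\<in>closure \<Omega>. \<forall>\<phi>\<in>Cb_inf. \<exists>\<omega>. positive_modulus \<omega> \<and>
      Limsup (at_right 0 \<times>\<^sub>F nhds x \<times>\<^sub>F nhds 0)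
        (\<lambda>(\<rho>,y,\<xi>). ereal (B_op \<Omega> A g \<rho> y (\<lambda>z. \<phi> z + \<xi>) (\<phi> y + \<xi> + \<omega> \<rho>)))
      \<le> (if x \<in> \<Omega> then F_upper \<Omega> F x (\<phi> x) (grad \<phi> x) (hess \<phi> x)
          else max (ereal (\<phi> x) - lsc_env UNIV g x) (F_upper \<Omega> F x (\<phi> x) (grad \<phi> x) (hess \<phi> x)))
    \<and>
      Liminf (at_right 0 \<times>\<^sub>F nhds x \<times>\<^sub>F nhds 0)
        (\<lambda>(\<rho>,y,\<xi>). ereal (B_op \<Omega> A g \<rho> y (\<lambda>z. \<phi> z + \<xi>) (\<phi> y + \<xi> - \<omega> \<rho>)))
      \<ge> (if x \<in> \<Omega> then F_lower \<Omega> F x (\<phi> x) (grad \<phi> x) (hess \<phi> x)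
          else min (ereal (\<phi> x) - usc_env UNIV g x) (F_lower \<Omega> F x (\<phi> x) (grad \<phi> x) (hess \<phi> x))))"

text \<open>Upper/lower envelopes of u relative to the closure of \<Omega> (finite for bounded u).\<close>
definition ustar :: "(real^'n::finite) set \<Rightarrow> (real^'n \<Rightarrow> real) \<Rightarrow> real^'n \<Rightarrow> real" where
  "ustar \<Omega> u x = real_of_ereal (usc_env (closure \<Omega>) u x)"

definition lstar :: "(real^'n::finite) set \<Rightarrow> (real^'n \<Rightarrow> real) \<Rightarrow> real^'n \<Rightarrow> real" where
  "lstar \<Omega> u x = real_of_ereal (lsc_env (closure \<Omega>) u x)"

definition pde_subsol where
  "pde_subsol \<Omega> F (g :: real^'n::finite \<Rightarrow> real) u =
    (u \<in> Xbar \<and> (\<forall>\<phi>\<in>Cb_inf. \<forall>x\<in>closure \<Omega>.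
      (\<forall>y\<in>closure \<Omega>. ustar \<Omega> u y - \<phi> y \<le> ustar \<Omega> u x - \<phi> x) \<longrightarrow>
      (if x \<in> \<Omega> then F_lower \<Omega> F x (ustar \<Omega> u x) (grad \<phi> x) (hess \<phi> x) \<le> 0
       else min (ereal (ustar \<Omega> u x) - usc_env UNIV g x)
                (F_lower \<Omega> F x (ustar \<Omega> u x) (grad \<phi> x) (hess \<phi> x)) \<le> 0)))"

definition pde_supersol where
  "pde_supersol \<Omega> F (g :: real^'n::finite \<Rightarrow> real) u =
    (u \<in> Xbar \<and> (\<forall>\<phi>\<in>Cb_inf. \<forall>x\<in>closure \<Omega>.
      (\<forall>y\<in>closure \<Omega>. lstar \<Omega> u y - \<phi> y \<ge> lstar \<Omega> u x - \<phi> x) \<longrightarrow>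
      (if x \<in> \<Omega> then F_upper \<Omega> F x (lstar \<Omega> u x) (grad \<phi> x) (hess \<phi> x) \<ge> 0
       else max (ereal (lstar \<Omega> u x) - lsc_env UNIV g x)
                (F_upper \<Omega> F x (lstar \<Omega> u x) (grad \<phi> x) (hess \<phi> x)) \<ge> 0)))"

definition pde_sol where
  "pde_sol \<Omega> F g u = (pde_subsol \<Omega> F g u \<and> pde_supersol \<Omega> F g u)"

definition usc_on :: "'a::metric_space set \<Rightarrow> ('a \<Rightarrow> real) \<Rightarrow> bool" where
  "usc_on S u = (\<forall>x\<in>S. \<forall>e>0. \<exists>d>0. \<forall>y\<in>S. dist y x < d \<longrightarrow> u y < u x + e)"

definition lsc_on :: "'a::metric_space set \<Rightarrow> ('a \<Rightarrow> real) \<Rightarrow> bool" where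
  "lsc_on S u = (\<forall>x\<in>S. \<forall>e>0. \<exists>d>0. \<forall>y\<in>S. dist y x < d \<longrightarrow> u y > u x - e)"

definition strong_uniqueness where
  "strong_uniqueness \<Omega> F g =
    (\<forall>u v. pde_subsol \<Omega> F g u \<and> usc_on (closure \<Omega>) u \<and>
           pde_supersol \<Omega> F g v \<and> lsc_on (closure \<Omega>) v \<longrightarrow> (\<forall>x\<in>closure \<Omega>. u x \<le> v x))"

end

theory Submission
  imports Defs "HOL-Computational_Algebra.Polynomial"
begin


lemma ev_prod2:
  "eventually P (at_right (0::real) \<times>\<^sub>F nhds (x::'a::metric_space)) \<longleftrightarrow>
   (\<exists>d>0. \<exists>e>0. \<forall>\<rho> y. 0<\<rho> \<longrightarrow> \<rho><d \<longrightarrow> dist y x < e \<longrightarrow> P (\<rho>,y))"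
proof
  assume "eventually P (at_right (0::real) \<times>\<^sub>F nhds x)"
  then obtain Pf Pg where "eventually Pf (at_right (0::real))" "eventually Pg (nhds x)"
    "\<forall>x y. Pf x \<longrightarrow> Pg y \<longrightarrow> P (x, y)" unfolding eventually_prod_filter by blast
  then show "\<exists>d>0. \<exists>e>0. \<forall>\<rho> y. 0<\<rho> \<longrightarrow> \<rho><d \<longrightarrow> dist y x < e \<longrightarrow> P (\<rho>,y)"
    unfolding eventually_at_right_field eventually_nhds_metric by (metis dist_commute)
next
  assume "\<exists>d>0. \<exists>e>0. \<forall>\<rho> y. 0<\<rho> \<longrightarrow> \<rho><d \<longrightarrow> dist y x < e \<longrightarrow> P (\<rho>,y)"
  then obtain d e where de: "d>0" "e>0" "\<forall>\<rho> y. 0<\<rho> \<longrightarrow> \<rho><d \<longrightarrow> dist y x < e \<longrightarrow> P (\<rho>,y)" by blast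
  have 1: "eventually (\<lambda>\<rho>. 0<\<rho> \<and> \<rho><d) (at_right (0::real))"
    unfolding eventually_at_right_field using de by auto
  have 2: "eventually (\<lambda>y. dist y x < e) (nhds x)"
    unfolding eventually_nhds_metric using de by (metis dist_commute)
  show "eventually P (at_right (0::real) \<times>\<^sub>F nhds x)"
    unfolding eventually_prod_filter using 1 2 de by blast
qed

lemma ev_prod2I:
  assumes "d>0" "e>0" "\<And>\<rho> y. 0<\<rho> \<Longrightarrow> \<rho><d \<Longrightarrow> dist y x < e \<Longrightarrow> P (\<rho>,y)"
  shows "eventually P (at_right (0::real) \<times>\<^sub>F nhds (x::'a::metric_space))"
  unfolding ev_prod2 using assms by blast

lemma ev_prod3:
  assumes "eventually P (at_right (0::real) \<times>\<^sub>F nhds (x::'a::metric_space) \<times>\<^sub>F nhds (0::real))"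
  shows "\<exists>d>0. \<exists>e1>0. \<exists>e2>0. \<forall>\<rho> y \<xi>. 0<\<rho> \<longrightarrow> \<rho><d \<longrightarrow> dist y x < e1 \<longrightarrow> \<bar>\<xi>\<bar> < e2 \<longrightarrow> P (\<rho>,y,\<xi>)"
proof -
  obtain Pf Q where "eventually Pf (at_right (0::real))" "eventually Q (nhds x \<times>\<^sub>F nhds (0::real))"
    "\<forall>x y. Pf x \<longrightarrow> Q y \<longrightarrow> P (x, y)" using assms unfolding eventually_prod_filter by blast
  moreover obtain Pg Ph where "eventually Pg (nhds x)" "eventually Ph (nhds (0::real))"
    "\<forall>x y. Pg x \<longrightarrow> Ph y \<longrightarrow> Q (x, y)" using calculation(2) unfolding eventually_prod_filter by blast
  ultimately show ?thesis
    unfolding eventually_at_right_field eventually_nhds_metric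
    by (metis dist_commute dist_real_def diff_0_right)
qed

lemma Liminf_le_freq:
  assumes "\<And>P. eventually P F \<Longrightarrow> \<exists>z. P z \<and> f z \<le> (c::ereal)"
  shows "Liminf F f \<le> c"
  unfolding Liminf_def
proof (rule SUP_least)
  fix P assume "P \<in> {P. eventually P F}"
  then obtain z where "P z" "f z \<le> c" using assms by auto
  then show "Inf (f ` Collect P) \<le> c" by (meson INF_lower2 mem_Collect_eq)
qed

lemma Limsup_ge_freq:
  assumes "\<And>P. eventually P F \<Longrightarrow> \<exists>z. P z \<and> f z \<ge> (c::ereal)"
  shows "Limsup F f \<ge> c"
  unfolding Limsup_def
proof (rule INF_greatest)
  fix P assume "P \<in> {P. eventually P F}"
  then obtain z where "P z" "f z \<ge> c" using assms by auto
  then show "c \<le> Sup (f ` Collect P)" by (meson SUP_upper2 mem_Collect_eq)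
qed

definition hlim :: "(real \<Rightarrow> 'a::metric_space \<Rightarrow> real) \<Rightarrow> 'a \<Rightarrow> real" where
  "hlim u x = real_of_ereal (Limsup (at_right 0 \<times>\<^sub>F nhds x) (\<lambda>(\<rho>,y). ereal (u \<rho> y)))"

lemma prod_nbot: "at_right (0::real) \<times>\<^sub>F nhds (x::'a::metric_space) \<noteq> bot"
  by (simp add: prod_filter_eq_bot)

lemma hl_fin:
  assumes bnd: "\<And>\<rho> y. 0<\<rho> \<Longrightarrow> \<bar>u \<rho> y\<bar> \<le> Mu"
  shows "Limsup (at_right 0 \<times>\<^sub>F nhds x) (\<lambda>(\<rho>,y). ereal (u \<rho> y)) = ereal (hlim u x)"
    and "\<bar>hlim u x\<bar> \<le> Mu"
proof -
  have ev: "eventually (\<lambda>(\<rho>,y). - Mu \<le> u \<rho> y \<and> u \<rho> y \<le> Mu) (at_right 0 \<times>\<^sub>F nhds x)"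
  proof -
    have "\<And>\<rho> y. 0<\<rho> \<Longrightarrow> -Mu \<le> u \<rho> y \<and> u \<rho> y \<le> Mu" using bnd by (metis abs_le_iff minus_le_iff)
    note H = this
    show ?thesis unfolding ev_prod2 by (rule exI[where x=1], simp, rule exI[where x=1]) (use H in auto)
  qed
  have a: "Limsup (at_right 0 \<times>\<^sub>F nhds x) (\<lambda>(\<rho>,y). ereal (u \<rho> y)) \<le> ereal Mu"
    by (rule Limsup_bounded) (rule eventually_mono[OF ev], auto)
  have b: "ereal (- Mu) \<le> Limsup (at_right 0 \<times>\<^sub>F nhds x) (\<lambda>(\<rho>,y). ereal (u \<rho> y))"
    by (rule le_Limsup[OF prod_nbot]) (rule eventually_mono[OF ev], auto)
  from a b show "Limsup (at_right 0 \<times>\<^sub>F nhds x) (\<lambda>(\<rho>,y). ereal (u \<rho> y)) = ereal (hlim u x)"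
    unfolding hlim_def by (cases "Limsup (at_right 0 \<times>\<^sub>F nhds x) (\<lambda>(\<rho>,y). ereal (u \<rho> y))") auto
  with a b show "\<bar>hlim u x\<bar> \<le> Mu" by auto
qed

lemma hl_upper:
  assumes bnd: "\<And>\<rho> y. 0<\<rho> \<Longrightarrow> \<bar>u \<rho> y\<bar> \<le> Mu" and "\<epsilon> > 0"
  shows "\<exists>d>0. \<exists>e>0. \<forall>\<rho> y. 0<\<rho> \<longrightarrow> \<rho><d \<longrightarrow> dist y x < e \<longrightarrow> u \<rho> y < hlim u x + \<epsilon>"
proof -
  have "Limsup (at_right 0 \<times>\<^sub>F nhds x) (\<lambda>(\<rho>,y). ereal (u \<rho> y)) < ereal (hlim u x + \<epsilon>)"
    using hl_fin(1)[of u Mu x, OF bnd] assms(2) by simp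
  from Limsup_lessD[OF this] show ?thesis unfolding ev_prod2 by auto
qed

lemma hl_freq:
  assumes bnd: "\<And>\<rho> y. 0<\<rho> \<Longrightarrow> \<bar>u \<rho> y\<bar> \<le> Mu" and "\<tau> > 0" "\<delta> > 0" "e > 0"
  shows "\<exists>\<rho> y. 0<\<rho> \<and> \<rho><\<delta> \<and> dist y x < e \<and> u \<rho> y > hlim u x - \<tau>"
proof (rule ccontr)
  assume H: "\<not> ?thesis"
  have EV: "eventually (\<lambda>(\<rho>,y). ereal (u \<rho> y) \<le> ereal (hlim u x - \<tau>)) (at_right 0 \<times>\<^sub>F nhds x)"
  proof (rule ev_prod2I[of \<delta> e])
    fix \<rho> y assume a: "0<\<rho>" "\<rho><\<delta>" "dist y x < e"
    have "\<not> (hlim u x - \<tau> < u \<rho> y)" using H a by blast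
    then show "case (\<rho>, y) of (\<rho>, y) \<Rightarrow> ereal (u \<rho> y) \<le> ereal (hlim u x - \<tau>)"
      by simp
  qed (use assms in auto)
  have "Limsup (at_right 0 \<times>\<^sub>F nhds x) (\<lambda>(\<rho>,y). ereal (u \<rho> y)) \<le> ereal (hlim u x - \<tau>)"
    by (intro Limsup_bounded, rule eventually_mono[OF EV]) auto
  then show False using hl_fin(1)[of u Mu x, OF bnd] assms(2) by simp
qed

lemma hl_usc:
  assumes bnd: "\<And>\<rho> y. 0<\<rho> \<Longrightarrow> \<bar>u \<rho> y\<bar> \<le> Mu" and "\<epsilon> > 0"
  shows "\<exists>d>0. \<forall>z. dist z x < d \<longrightarrow> hlim u z < hlim u x + \<epsilon>"
proof -
  obtain d e where de: "d>0" "e>0" "\<forall>\<rho> y. 0<\<rho> \<longrightarrow> \<rho><d \<longrightarrow> dist y x < e \<longrightarrow> u \<rho> y < hlim u x + \<epsilon>/2"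
    using hl_upper[of u Mu "\<epsilon>/2" x, OF bnd] assms(2) by auto
  have "hlim u z < hlim u x + \<epsilon>" if z: "dist z x < e" for z
  proof -
    have EV: "eventually (\<lambda>(\<rho>,y). ereal (u \<rho> y) \<le> ereal (hlim u x + \<epsilon>/2)) (at_right 0 \<times>\<^sub>F nhds z)"
    proof (rule ev_prod2I[of d "e - dist z x"])
      fix \<rho> y assume "0 < \<rho>" "\<rho> < d" "dist y z < e - dist z x"
      moreover have "dist y x \<le> dist y z + dist z x" by (rule dist_triangle)
      ultimately have "dist y x < e" by linarith
      then show "(case (\<rho>, y) of (\<rho>, y) \<Rightarrow> ereal (u \<rho> y) \<le> ereal (hlim u x + \<epsilon> / 2))"
        using de \<open>0 < \<rho>\<close> \<open>\<rho> < d\<close> by (simp add: less_imp_le)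
    qed (use de z in auto)
    have "Limsup (at_right 0 \<times>\<^sub>F nhds z) (\<lambda>(\<rho>,y). ereal (u \<rho> y)) \<le> ereal (hlim u x + \<epsilon>/2)"
      by (intro Limsup_bounded, rule eventually_mono[OF EV]) auto
    then show ?thesis using hl_fin(1)[of u Mu z, OF bnd] assms(2) by simp
  qed
  then show ?thesis using de by auto
qed

lemma compact_unif:
  fixes S :: "'a::metric_space set"
  assumes "compact S"
    and "\<forall>x\<in>S. \<exists>d>0. \<exists>e>0. \<forall>\<rho> y. 0<\<rho> \<longrightarrow> \<rho><d \<longrightarrow> dist y x < e \<longrightarrow> P \<rho> y"
  shows "\<exists>d>0. \<forall>\<rho> y. 0<\<rho> \<longrightarrow> \<rho><(d::real) \<longrightarrow> y\<in>S \<longrightarrow> P \<rho> y"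
proof -
  obtain dd ee where dd: "\<forall>x\<in>S. dd x > 0 \<and> ee x > 0 \<and>
      (\<forall>\<rho> y. 0<\<rho> \<longrightarrow> \<rho><dd x \<longrightarrow> dist y x < ee x \<longrightarrow> P \<rho> y)"
    using assms(2) by metis
  have "S \<subseteq> (\<Union>x\<in>S. ball x (ee x))" using dd by auto
  then obtain T where T: "T \<subseteq> S" "finite T" "S \<subseteq> (\<Union>x\<in>T. ball x (ee x))"
    using compactE_image[OF assms(1), of S "\<lambda>x. ball x (ee x)"] by blast
  show ?thesis
  proof (cases "T = {}")
    case True then show ?thesis using T by (auto intro!: exI[of _ 1])
  next
    case False
    define d where "d = Min (dd ` T)"
    have "d > 0" unfolding d_def using T False dd by (subst Min_gr_iff) auto
    moreover have "P \<rho> y" if "0<\<rho>" "\<rho><d" "y\<in>S" for \<rho> y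
    proof -
      from T(3) that(3) obtain x where x: "x\<in>T" "y \<in> ball x (ee x)" by auto
      have "d \<le> dd x" unfolding d_def using x T by auto
      then show ?thesis using dd x T that by (auto simp: dist_commute subset_eq)
    qed
    ultimately show ?thesis by blast
  qed
qed



lemma ev_nhds_point: "eventually P (nhds x) \<Longrightarrow> P x"
  by (simp add: eventually_nhds) (blast)

lemma env_ge: "x \<in> C \<Longrightarrow> ereal (f x) \<le> usc_env C f x"
  unfolding usc_env_def
proof (rule Limsup_greatest)
  fix P assume "x \<in> C" "eventually P (inf (nhds x) (principal C))"
  then have "P x" unfolding eventually_inf_principal using ev_nhds_point by fastforce
  then show "ereal (f x) \<le> Sup ((\<lambda>y. ereal (f y)) ` Collect P)" by (auto intro: SUP_upper)
qed

lemma env_le: "(\<And>y. \<bar>f y\<bar> \<le> B) \<Longrightarrow> usc_env C f x \<le> ereal B"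
  unfolding usc_env_def by (rule Limsup_bounded) (auto simp: abs_le_iff)

lemma env_bot:
  fixes x :: "'a::metric_space"
  assumes "x \<notin> closure C" shows "usc_env C f x = -\<infinity>"
proof -
  obtain e where "e>0" "\<forall>y\<in>C. \<not> dist y x < e" using assms unfolding closure_approachable by auto
  then have "eventually (\<lambda>y. y \<in> C \<longrightarrow> False) (nhds x)"
    unfolding eventually_nhds_metric by blast
  then have "inf (nhds x) (principal C) = bot"
    unfolding eventually_False[symmetric] eventually_inf_principal .
  then show ?thesis unfolding usc_env_def by (simp add: bot_ereal_def)
qed

lemma env_usc_eq:
  fixes f :: "'a::metric_space \<Rightarrow> real"
  assumes "usc_on C f" "x \<in> C" shows "usc_env C f x = ereal (f x)"
proof (rule antisym)
  show "usc_env C f x \<le> ereal (f x)"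
  proof (rule ereal_le_epsilon2)
    fix e :: real assume "e > 0"
    then obtain d where d: "d>0" "\<forall>y\<in>C. dist y x < d \<longrightarrow> f y < f x + e"
      using assms unfolding usc_on_def by blast
    have "eventually (\<lambda>y. y \<in> C \<longrightarrow> ereal (f y) \<le> ereal (f x) + ereal e) (nhds x)"
      unfolding eventually_nhds_metric using d by (auto intro!: exI[of _ d] simp: dist_commute less_imp_le)
    then show "usc_env C f x \<le> ereal (f x) + ereal e"
      unfolding usc_env_def by (intro Limsup_bounded) (simp add: eventually_inf_principal)
  qed
  show "ereal (f x) \<le> usc_env C f x" using env_ge assms(2) .
qed

lemma env_fin:
  assumes "\<And>y. \<bar>f y\<bar> \<le> B" "x \<in> C"
  shows "usc_env C f x = ereal (real_of_ereal (usc_env C f x))"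
    and "\<bar>real_of_ereal (usc_env C f x)\<bar> \<le> B" and "f x \<le> real_of_ereal (usc_env C f x)"
proof -
  have a: "usc_env C f x \<le> ereal B" by (rule env_le) fact
  have b: "ereal (f x) \<le> usc_env C f x" by (rule env_ge) fact
  have c: "- B \<le> f x" using assms(1)[of x] by auto
  show "usc_env C f x = ereal (real_of_ereal (usc_env C f x))"
    using a b by (cases "usc_env C f x") auto
  moreover show "\<bar>real_of_ereal (usc_env C f x)\<bar> \<le> B" using a b c by (cases "usc_env C f x") auto
  show "f x \<le> real_of_ereal (usc_env C f x)" using a b by (cases "usc_env C f x") auto
qed

lemma env_usc:
  fixes f :: "'a::metric_space \<Rightarrow> real"
  assumes bnd: "\<And>y. \<bar>f y\<bar> \<le> B"
  shows "usc_on C (\<lambda>x. real_of_ereal (usc_env C f x))"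
  unfolding usc_on_def
proof (intro ballI allI impI)
  fix x e assume x: "x \<in> C" and e: "(e::real) > 0"
  let ?U = "\<lambda>x. real_of_ereal (usc_env C f x)"
  obtain r where r: "usc_env C f x = ereal r" using env_fin(1)[where f=f, OF bnd x] by blast
  then have rU: "?U x = r" by simp
  have "usc_env C f x < ereal (?U x + e/2)" using e unfolding rU r by simp
  then have "eventually (\<lambda>y. ereal (f y) < ereal (?U x + e/2)) (inf (nhds x) (principal C))"
    unfolding usc_env_def by (rule Limsup_lessD)
  then have "eventually (\<lambda>y. f y < ?U x + e/2) (inf (nhds x) (principal C))" by simp
  then obtain d where d: "d>0" "\<forall>y. dist y x < d \<longrightarrow> y \<in> C \<longrightarrow> f y < ?U x + e/2"
    unfolding eventually_inf_principal eventually_nhds_metric by blast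
  have "?U z < ?U x + e" if z: "z \<in> C" "dist z x < d" for z
  proof -
    have "eventually (\<lambda>y. y \<in> C \<longrightarrow> ereal (f y) \<le> ereal (?U x + e/2)) (nhds z)"
      unfolding eventually_nhds_metric
    proof (intro exI[of _ "d - dist z x"] conjI allI impI)
      fix y assume "dist y z < d - dist z x" "y \<in> C"
      moreover have "dist y x \<le> dist y z + dist z x" by (rule dist_triangle)
      ultimately show "ereal (f y) \<le> ereal (?U x + e / 2)" using d by (simp add: less_imp_le)
    qed (use z in auto)
    then have "usc_env C f z \<le> ereal (?U x + e/2)"
      unfolding usc_env_def by (intro Limsup_bounded) (simp add: eventually_inf_principal)
    moreover obtain r' where r': "usc_env C f z = ereal r'" using env_fin(1)[where f=f, OF bnd z(1)] by blast
    ultimately have "?U z \<le> ?U x + e/2" by simp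
    then show ?thesis using e by linarith
  qed
  then show "\<exists>d>0. \<forall>y\<in>C. dist y x < d \<longrightarrow> ?U y < ?U x + e" using d by blast
qed

lemma lsc_env_neg: "lsc_env C f x = - usc_env C (\<lambda>y. - f y) x"
proof -
  have "lsc_env C f x = Liminf (inf (nhds x) (principal C)) (\<lambda>y. - ereal (- f y))"
    unfolding lsc_env_def by simp
  also have "\<dots> = - usc_env C (\<lambda>y. - f y) x"
    unfolding usc_env_def by (rule ereal_Liminf_uminus)
  finally show ?thesis .
qed

lemma lsc_on_neg: "lsc_on C f \<longleftrightarrow> usc_on C (\<lambda>y. - f y)"
proof -
  have "\<And>a b e. (a > b - e) = (-a < -b + (e::real))" by linarith
  then show ?thesis unfolding lsc_on_def usc_on_def by simp
qed

lemma ustar_props: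
  fixes w :: "real^'n::finite \<Rightarrow> real"
  assumes bnd: "\<And>y. \<bar>w y\<bar> \<le> B"
  shows "x \<in> closure \<Omega> \<Longrightarrow> w x \<le> ustar \<Omega> w x \<and> \<bar>ustar \<Omega> w x\<bar> \<le> B"
    and "x \<notin> closure \<Omega> \<Longrightarrow> ustar \<Omega> w x = 0"
    and "usc_on (closure \<Omega>) (ustar \<Omega> w)"
proof -
  show "x \<in> closure \<Omega> \<Longrightarrow> w x \<le> ustar \<Omega> w x \<and> \<bar>ustar \<Omega> w x\<bar> \<le> B"
    unfolding ustar_def by (intro conjI env_fin(2,3)[OF bnd])
  show "x \<notin> closure \<Omega> \<Longrightarrow> ustar \<Omega> w x = 0"
  proof -
    assume "x \<notin> closure \<Omega>"
    then have "usc_env (closure \<Omega>) w x = -\<infinity>" by (intro env_bot) simp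
    then show "ustar \<Omega> w x = 0" unfolding ustar_def by simp
  qed
  show "usc_on (closure \<Omega>) (ustar \<Omega> w)"
    using env_usc[OF bnd, of "closure \<Omega>"] unfolding ustar_def[abs_def] .
qed

lemma ustar_usc_eq:
  fixes w :: "real^'n::finite \<Rightarrow> real"
  assumes "usc_on (closure \<Omega>) w" "x \<in> closure \<Omega>"
  shows "ustar \<Omega> w x = w x"
proof -
  have "usc_env (closure \<Omega>) w x = ereal (w x)" by (rule env_usc_eq[OF assms])
  then show ?thesis unfolding ustar_def by simp
qed

lemma ustar_idem:
  fixes w :: "real^'n::finite \<Rightarrow> real"
  assumes bnd: "\<And>y. \<bar>w y\<bar> \<le> B"
  shows "ustar \<Omega> (ustar \<Omega> w) = ustar \<Omega> w"
proof
  fix x show "ustar \<Omega> (ustar \<Omega> w) x = ustar \<Omega> w x"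
  proof (cases "x \<in> closure \<Omega>")
    case True then show ?thesis by (rule ustar_usc_eq[OF ustar_props(3)[OF bnd]])
  next
    case False
    then have "usc_env (closure \<Omega>) (ustar \<Omega> w) x = -\<infinity>" by (intro env_bot) simp
    then show ?thesis using ustar_props(2)[OF bnd False] unfolding ustar_def by simp
  qed
qed

lemma lstar_neg: "lstar \<Omega> w = (\<lambda>x. - ustar \<Omega> (\<lambda>y. - w y) x)"
  unfolding lstar_def ustar_def lsc_env_neg by simp



lemma pd_at: "(f has_derivative f') (at x) \<Longrightarrow> partial_deriv i f x = f' (axis i 1)"
  unfolding partial_deriv_def by (metis frechet_derivative_at)

lemma pd_add:
  assumes "f differentiable at x" "g differentiable at x"
  shows "partial_deriv i (\<lambda>y. f y + g y) x = partial_deriv i f x + partial_deriv i g x"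
proof -
  have "((\<lambda>y. f y + g y) has_derivative (\<lambda>v. frechet_derivative f (at x) v + frechet_derivative g (at x) v)) (at x)"
    using assms by (intro has_derivative_add) (simp_all add: frechet_derivative_works[symmetric])
  then show ?thesis unfolding partial_deriv_def using frechet_derivative_at by metis
qed

lemma pd_const: "partial_deriv i (\<lambda>y. c) x = 0"
  unfolding partial_deriv_def by simp

lemma pd_scale:
  assumes "f differentiable at x"
  shows "partial_deriv i (\<lambda>y. a * f y) x = a * partial_deriv i f x"
proof -
  have "((\<lambda>y. a * f y) has_derivative (\<lambda>v. a * frechet_derivative f (at x) v)) (at x)"
    using assms by (intro has_derivative_mult_right) (simp_all add: frechet_derivative_works[symmetric])
  then show ?thesis unfolding partial_deriv_def using frechet_derivative_at by metis
qed

lemma diff_on_at: "f differentiable_on UNIV \<Longrightarrow> f differentiable at x"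
  unfolding differentiable_on_def by auto

lemma bounded_range_add:
  assumes "bounded (range f)" "bounded (range g)"
  shows "bounded (range (\<lambda>y. (f y::real) + g y))"
proof -
  obtain B1 B2 where "\<forall>y. \<bar>f y\<bar> \<le> B1" "\<forall>y. \<bar>g y\<bar> \<le> B2"
    using assms unfolding bounded_iff by auto
  then have "\<forall>y. \<bar>f y + g y\<bar> \<le> B1 + B2" by (meson abs_triangle_ineq add_mono order_trans)
  then show ?thesis unfolding bounded_iff by auto
qed

lemma bounded_range_scale:
  assumes "bounded (range f)"
  shows "bounded (range (\<lambda>y. a * (f y::real)))"
proof -
  obtain B1 where "\<forall>y. \<bar>f y\<bar> \<le> B1"
    using assms unfolding bounded_iff by auto
  then have "\<forall>y. \<bar>a * f y\<bar> \<le> \<bar>a\<bar> * B1" by (simp add: abs_mult mult_left_mono)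
  then show ?thesis unfolding bounded_iff by auto
qed

lemma Cbk_const: "Cbk k (\<lambda>y::real^'n::finite. c)"
proof (induction k arbitrary: c)
  case 0 then show ?case by (simp add: continuous_on_const)
next
  case (Suc k)
  have "partial_deriv i (\<lambda>y::real^'n. c) = (\<lambda>y. 0)" for i by (rule ext) (rule pd_const)
  then show ?case using Suc by (simp add: continuous_on_const)
qed

lemma Cbk_add: "Cbk k f \<Longrightarrow> Cbk k g \<Longrightarrow> Cbk k (\<lambda>y::real^'n::finite. f y + g y)"
proof (induction k arbitrary: f g)
  case 0 then show ?case by (auto intro: continuous_on_add bounded_range_add)
next
  case (Suc k)
  have df: "f differentiable_on UNIV" and dg: "g differentiable_on UNIV" using Suc.prems by auto
  have "partial_deriv i (\<lambda>y. f y + g y) = (\<lambda>y. partial_deriv i f y + partial_deriv i g y)" for i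
    by (rule ext) (rule pd_add[OF diff_on_at[OF df] diff_on_at[OF dg]])
  then show ?case using Suc df dg
    by (auto intro: continuous_on_add bounded_range_add differentiable_on_add)
qed

lemma Cbk_scale: "Cbk k f \<Longrightarrow> Cbk k (\<lambda>y::real^'n::finite. a * f y)"
proof (induction k arbitrary: f)
  case 0 then show ?case by (auto intro: continuous_on_mult_left bounded_range_scale)
next
  case (Suc k)
  have df: "f differentiable_on UNIV" using Suc.prems by auto
  have "partial_deriv i (\<lambda>y. a * f y) = (\<lambda>y. a * partial_deriv i f y)" for i
    by (rule ext) (rule pd_scale[OF diff_on_at[OF df]])
  then show ?case using Suc df
    by (auto intro: continuous_on_mult_left bounded_range_scale differentiable_on_mult)
qed

lemma Cbk_sum: "finite S \<Longrightarrow> (\<And>i. i \<in> S \<Longrightarrow> Cbk k (f i)) \<Longrightarrow> Cbk k (\<lambda>y::real^'n::finite. \<Sum>i\<in>S. f i y)"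
proof (induction S rule: finite_induct)
  case empty then show ?case using Cbk_const[of k 0] by simp
next
  case (insert a S) then show ?case by (simp add: Cbk_add)
qed

lemma Cb_inf_add: "f \<in> Cb_inf \<Longrightarrow> g \<in> Cb_inf \<Longrightarrow> (\<lambda>y. f y + g y) \<in> Cb_inf"
  unfolding Cb_inf_def by (auto intro: Cbk_add)

lemma Cb_inf_const: "(\<lambda>y. c) \<in> Cb_inf"
  unfolding Cb_inf_def by (auto intro: Cbk_const)

lemma Cb_inf_scale: "f \<in> Cb_inf \<Longrightarrow> (\<lambda>y. a * f y) \<in> Cb_inf"
  unfolding Cb_inf_def by (auto intro: Cbk_scale)

lemma coord_deriv:
  assumes "\<And>t. (h has_real_derivative h' t) (at t)"
  shows "((\<lambda>y::real^'n::finite. h (y$i - c)) has_derivative (\<lambda>v. h' (y$i - c) * v$i)) (at y)"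
proof -
  have 1: "((\<lambda>y::real^'n. y$i - c) has_derivative (\<lambda>v. v$i)) (at y)"
    by (auto intro!: derivative_eq_intros bounded_linear_imp_has_derivative)
  have 2: "(h has_derivative (\<lambda>x. h' (y$i - c) * x)) (at (y$i - c))"
    using assms[of "y$i - c"] unfolding has_field_derivative_def by simp
  show ?thesis using has_derivative_compose[OF 1 2] by simp
qed

lemma pd_coord:
  assumes "\<And>t. (h has_real_derivative h' t) (at t)"
  shows "partial_deriv j (\<lambda>y::real^'n::finite. h (y$i - c)) y = (if j = i then h' (y$i - c) else 0)"
proof -
  have "partial_deriv j (\<lambda>y::real^'n::finite. h (y$i - c)) y = h' (y$i - c) * (axis j 1 $ i)"
    by (rule pd_at[OF coord_deriv[OF assms]])
  then show ?thesis by (simp add: axis_def)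
qed

lemma Cbk_coord:
  fixes D :: "nat \<Rightarrow> real \<Rightarrow> real"
  assumes der: "\<And>n t. (D n has_real_derivative D (Suc n) t) (at t)"
    and bnd: "\<And>n. bounded (range (D n))"
  shows "Cbk k (\<lambda>y::real^'n::finite. D n (y$i - c))"
proof (induction k arbitrary: n)
  case 0
  have "(\<lambda>y::real^'n. D n (y$i - c)) differentiable_on UNIV"
    using coord_deriv[OF der] unfolding differentiable_on_def differentiable_def by blast
  moreover have "range (\<lambda>y::real^'n. D n (y$i - c)) \<subseteq> range (D n)" by auto
  ultimately show ?case using bnd[of n] by (auto intro: differentiable_imp_continuous_on bounded_subset)
next
  case (Suc k)
  have d: "(\<lambda>y::real^'n. D n (y$i - c)) differentiable_on UNIV"
    using coord_deriv[OF der] unfolding differentiable_on_def differentiable_def by blast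
  moreover have "range (\<lambda>y::real^'n. D n (y$i - c)) \<subseteq> range (D n)" by auto
  moreover have "Cbk k (partial_deriv j (\<lambda>y::real^'n. D n (y$i - c)))" for j
  proof (cases "j = i")
    case True
    then have "partial_deriv j (\<lambda>y::real^'n. D n (y$i - c)) = (\<lambda>y. D (Suc n) (y$i - c))"
      by (intro ext) (simp add: pd_coord[OF der] True)
    then show ?thesis using Suc.IH by simp
  next
    case False
    then have "partial_deriv j (\<lambda>y::real^'n. D n (y$i - c)) = (\<lambda>y. 0)"
      by (intro ext) (simp add: pd_coord[OF der] False)
    then show ?thesis using Cbk_const by simp
  qed
  ultimately show ?case using bnd[of n] by (auto intro: differentiable_imp_continuous_on bounded_subset)
qed



fun Pt :: "nat \<Rightarrow> real poly" where
  "Pt 0 = [:0,0,0,0,1:]"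
| "Pt (Suc n) = pderiv (Pt n) * [:1,0,-1:]"

definition Dt :: "nat \<Rightarrow> real \<Rightarrow> real" where
  "Dt n t = poly (Pt n) (tanh t)"

lemma Dt_deriv: "(Dt n has_real_derivative Dt (Suc n) t) (at t)"
proof -
  have "((\<lambda>t. poly (Pt n) (tanh t)) has_real_derivative poly (pderiv (Pt n)) (tanh t) * (1 - tanh t ^ 2)) (at t)"
    by (auto intro!: derivative_eq_intros simp: cosh_real_pos[THEN less_imp_neq, symmetric])
  moreover have "poly (pderiv (Pt n)) (tanh t) * (1 - tanh t ^ 2) = Dt (Suc n) t"
    by (simp add: Dt_def power2_eq_square algebra_simps)
  ultimately show ?thesis unfolding Dt_def[abs_def] by simp
qed

lemma Dt_deriv1: "(Dt 0 has_real_derivative Dt 1 t) (at t)"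
  using Dt_deriv[of 0] by simp

lemma Dt_deriv2: "(Dt 1 has_real_derivative Dt 2 t) (at t)"
  using Dt_deriv[of 1] by (simp add: numeral_2_eq_2)

lemma Dt_bnd: "bounded (range (Dt n))"
proof -
  have "compact (poly (Pt n) ` {-1..1})"
    by (rule compact_continuous_image) (auto intro: continuous_intros)
  then have "bounded (poly (Pt n) ` {-1..1})" by (rule compact_imp_bounded)
  moreover have "range (Dt n) \<subseteq> poly (Pt n) ` {-1..1}"
    unfolding Dt_def using tanh_real_bounds by (auto intro!: imageI simp: less_imp_le)
  ultimately show ?thesis by (rule bounded_subset)
qed

lemma Dt0: "Dt 0 t = tanh t ^ 4"
  by (simp add: Dt_def eval_nat_numeral algebra_simps)

lemma Dt_zero: "Dt 0 0 = 0" "Dt 1 0 = 0" "Dt 2 0 = 0"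
  by (simp_all add: Dt_def numeral_2_eq_2 pderiv_mult pderiv_pCons)

lemma Dt_zero': "Dt (Suc 0) 0 = 0"
  using Dt_zero(2) by simp

definition psi :: "real^'n::finite \<Rightarrow> real^'n \<Rightarrow> real" where
  "psi a y = (\<Sum>i\<in>UNIV. Dt 0 (y$i - a$i))"

lemma psi_Cb: "psi a \<in> Cb_inf"
  unfolding Cb_inf_def psi_def[abs_def]
  by (auto intro!: Cbk_sum Cbk_coord Dt_deriv Dt_bnd)

lemma psi_deriv: "(psi a has_derivative (\<lambda>v. \<Sum>i\<in>UNIV. Dt 1 (y$i - a$i) * v$i)) (at y)"
  unfolding psi_def[abs_def] by (intro has_derivative_sum coord_deriv Dt_deriv1)

lemma psi_pd: "partial_deriv i (psi a) = (\<lambda>y. Dt 1 (y$i - a$i))"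
proof
  fix y
  have "partial_deriv i (psi a) y = (\<Sum>k\<in>UNIV. Dt 1 (y$k - a$k) * (axis i 1 $ k))"
    by (rule pd_at[OF psi_deriv])
  also have "\<dots> = Dt 1 (y$i - a$i)" by (simp add: axis_def if_distrib cong: if_cong)
  finally show "partial_deriv i (psi a) y = Dt 1 (y$i - a$i)" .
qed

lemma psi_grad: "grad (psi a) a = 0"
  by (simp add: grad_def vec_eq_iff psi_pd Dt_zero Dt_zero')

lemma psi_hess:
  fixes a :: "real^'n::finite"
  shows "hess (psi a) a = 0"
proof -
  have "partial_deriv j (\<lambda>y::real^'n. Dt 1 (y$i - a$i)) a = 0" for i j
    using pd_coord[of "Dt 1" "Dt 2" j i "a$i" a, OF Dt_deriv2] by (simp add: Dt_zero)
  then show ?thesis by (simp add: hess_def vec_eq_iff psi_pd)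
qed

lemma psi_at: "psi a a = 0"
  by (simp add: psi_def Dt_zero)

lemma psi_nonneg: "psi a y \<ge> 0"
  unfolding psi_def Dt0 by (intro sum_nonneg) (simp add: zero_le_even_power)

lemma psi_ge_comp: "psi a y \<ge> tanh \<bar>y$j - a$j\<bar> ^ 4"
proof -
  have "tanh \<bar>y$j - a$j\<bar> ^ 4 = Dt 0 (y$j - a$j)" unfolding Dt0 tanh_real_abs by (simp add: power_even_abs)
  also have "\<dots> \<le> (\<Sum>i\<in>UNIV. Dt 0 (y$i - a$i))"
    by (rule member_le_sum) (auto simp: Dt0 zero_le_even_power)
  finally show ?thesis unfolding psi_def .
qed

lemma exists_big_comp:
  fixes z :: "real^'n::finite"
  shows "\<exists>j. norm z \<le> real CARD('n) * \<bar>z$j\<bar>"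
proof -
  let ?f = "\<lambda>i. \<bar>z$i\<bar>"
  have "Max (range ?f) \<in> range ?f" by (rule Max_in) auto
  then obtain j where j: "Max (range ?f) = ?f j" by blast
  have "norm z \<le> (\<Sum>i\<in>UNIV. ?f i)" by (rule norm_le_l1_cart)
  also have "\<dots> \<le> of_nat (card (UNIV::'n set)) * ?f j"
    by (rule sum_bounded_above) (simp add: j[symmetric])
  finally show ?thesis by auto
qed

lemma psi_lower:
  fixes a y :: "real^'n::finite"
  assumes "dist y a \<ge> r" "r > 0"
  shows "psi a y \<ge> tanh (r / real CARD('n)) ^ 4"
proof -
  obtain j where j: "norm (y - a) \<le> real CARD('n) * \<bar>(y - a)$j\<bar>" using exists_big_comp by blast
  have "r / real CARD('n) \<le> \<bar>y$j - a$j\<bar>"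
    using j assms by (simp add: dist_norm field_simps)
  then have "tanh (r / real CARD('n)) \<le> tanh \<bar>y$j - a$j\<bar>" by (simp del: tanh_real_abs)
  moreover have "0 \<le> tanh (r / real CARD('n))" using assms by simp
  ultimately have "tanh (r / real CARD('n)) ^ 4 \<le> tanh \<bar>y$j - a$j\<bar> ^ 4" by (rule power_mono)
  then show ?thesis using psi_ge_comp[where a=a and y=y and j=j] by linarith
qed

lemma psi_cont: "continuous_on UNIV (psi a)"
proof -
  have "Cbk 0 (psi a)" using psi_Cb unfolding Cb_inf_def by blast
  then show ?thesis by simp
qed

lemma Cb_diff: "f \<in> Cb_inf \<Longrightarrow> f differentiable at x"
proof -
  assume "f \<in> Cb_inf"
  then have "Cbk (Suc 0) f" unfolding Cb_inf_def by blast
  then have "f differentiable_on UNIV" by simp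
  then show ?thesis by (rule diff_on_at)
qed

lemma Cb_pd_diff: "f \<in> Cb_inf \<Longrightarrow> partial_deriv i f differentiable at x"
proof -
  assume "f \<in> Cb_inf"
  then have "Cbk (Suc (Suc 0)) f" unfolding Cb_inf_def by blast
  then have "partial_deriv i f differentiable_on UNIV" by simp
  then show ?thesis by (rule diff_on_at)
qed

lemma gh_add:
  assumes "f \<in> Cb_inf" "g \<in> Cb_inf"
  shows "grad (\<lambda>y. f y + g y) x = grad f x + grad g x"
    and "hess (\<lambda>y. f y + g y) x = hess f x + hess g x"
proof -
  show "grad (\<lambda>y. f y + g y) x = grad f x + grad g x"
    by (simp add: grad_def vec_eq_iff pd_add Cb_diff assms)
  have "partial_deriv i (\<lambda>y. f y + g y) = (\<lambda>y. partial_deriv i f y + partial_deriv i g y)" for i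
    by (rule ext) (simp add: pd_add Cb_diff assms)
  then show "hess (\<lambda>y. f y + g y) x = hess f x + hess g x"
    by (simp add: hess_def vec_eq_iff pd_add Cb_pd_diff assms)
qed

lemma gh_const:
  fixes x :: "real^'n::finite"
  shows "grad (\<lambda>y. c) x = 0" "hess (\<lambda>y. c) x = 0"
proof -
  have "partial_deriv i (\<lambda>y::real^'n. c) = (\<lambda>y. 0)" for i by (rule ext) (rule pd_const)
  then show "grad (\<lambda>y::real^'n. c) x = 0" "hess (\<lambda>y::real^'n. c) x = 0"
    by (simp_all add: grad_def hess_def vec_eq_iff pd_const)
qed

lemma gh_scale:
  assumes "f \<in> Cb_inf"
  shows "grad (\<lambda>y. K * f y) x = K *\<^sub>R grad f x"
    and "hess (\<lambda>y. K * f y) x = K *\<^sub>R hess f x"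
proof -
  show "grad (\<lambda>y. K * f y) x = K *\<^sub>R grad f x"
    by (simp add: grad_def vec_eq_iff pd_scale Cb_diff assms)
  have "partial_deriv i (\<lambda>y. K * f y) = (\<lambda>y. K * partial_deriv i f y)" for i
    by (rule ext) (simp add: pd_scale Cb_diff assms)
  then show "hess (\<lambda>y. K * f y) x = K *\<^sub>R hess f x"
    by (simp add: hess_def vec_eq_iff pd_scale Cb_pd_diff assms)
qed

lemma test_fun:
  fixes \<phi> :: "real^'n::finite \<Rightarrow> real" and c K :: real and a :: "real^'n"
  assumes "\<phi> \<in> Cb_inf"
  defines "\<phi>1 \<equiv> (\<lambda>y. \<phi> y + (c + K * psi a y))"
  shows "\<phi>1 \<in> Cb_inf" "grad \<phi>1 a = grad \<phi> a" "hess \<phi>1 a = hess \<phi> a" "\<phi>1 a = \<phi> a + c"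
    "\<And>\<xi>. (\<lambda>z. \<phi>1 z + \<xi>) \<in> Cb_inf"
proof -
  have g: "(\<lambda>y. c + K * psi a y) \<in> Cb_inf" by (intro Cb_inf_add Cb_inf_const Cb_inf_scale psi_Cb)
  show "\<phi>1 \<in> Cb_inf" unfolding \<phi>1_def using assms(1) g by (rule Cb_inf_add)
  then show "\<And>\<xi>. (\<lambda>z. \<phi>1 z + \<xi>) \<in> Cb_inf" by (intro Cb_inf_add Cb_inf_const)
  show "grad \<phi>1 a = grad \<phi> a" unfolding \<phi>1_def
    by (simp add: gh_add[OF assms(1) g] gh_add[OF Cb_inf_const Cb_inf_scale[OF psi_Cb]] gh_const gh_scale[OF psi_Cb] psi_grad)
  show "hess \<phi>1 a = hess \<phi> a" unfolding \<phi>1_def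
    by (simp add: gh_add[OF assms(1) g] gh_add[OF Cb_inf_const Cb_inf_scale[OF psi_Cb]] gh_const gh_scale[OF psi_Cb] psi_hess)
  show "\<phi>1 a = \<phi> a + c" unfolding \<phi>1_def by (simp add: psi_at)
qed



lemma core:
  fixes u :: "real \<Rightarrow> real^'n::finite \<Rightarrow> real" and PhiT \<psi> :: "real^'n \<Rightarrow> real"
    and \<Omega> C :: "(real^'n) set" and xo :: "real^'n"
  assumes ubnd: "\<And>\<rho> y. 0<\<rho> \<Longrightarrow> \<bar>u \<rho> y\<bar> \<le> Mu"
    and \<Phi>bnd: "\<And>y. \<bar>PhiT y\<bar> \<le> M\<Phi>"
    and \<Phi>cont: "continuous_on UNIV PhiT"
    and \<psi>nn: "\<And>y. \<psi> y \<ge> 0" and \<psi>xo: "\<psi> xo = 0" and \<psi>cont: "continuous_on UNIV \<psi>"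
    and \<psi>low: "\<And>a. a > 0 \<Longrightarrow> \<exists>\<eta>>0. \<forall>y. dist y xo \<ge> a \<longrightarrow> \<psi> y \<ge> \<eta>"
    and Ccl: "closed C" and \<Omega>C: "\<Omega> \<subseteq> C"
    and P1: "\<And>yb \<epsilon>. yb \<in> C \<Longrightarrow> \<epsilon>>0 \<Longrightarrow> \<exists>d>0. \<exists>e>0. \<forall>\<rho> y. 0<\<rho> \<longrightarrow> \<rho><d \<longrightarrow> dist y yb < e \<longrightarrow> u \<rho> y < PhiT y + \<epsilon>"
    and r: "r > 0" and gm: "gm > 0"
    and ext: "\<And>\<rho> y. 0<\<rho> \<Longrightarrow> dist y xo \<le> r \<Longrightarrow> y \<notin> \<Omega> \<Longrightarrow> u \<rho> y \<le> PhiT y - gm"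
    and P3: "\<And>\<tau> \<delta> e. \<tau>>0 \<Longrightarrow> \<delta>>0 \<Longrightarrow> e>0 \<Longrightarrow> \<exists>\<rho> y. 0<\<rho> \<and> \<rho><\<delta> \<and> dist y xo < e \<and> u \<rho> y > PhiT xo - \<tau>"
  shows "\<exists>K. \<forall>\<omega>::real\<Rightarrow>real. (\<forall>\<rho>>0. \<omega> \<rho> > 0) \<longrightarrow> (\<forall>\<delta> e1 e2. \<delta>>0 \<longrightarrow> e1>0 \<longrightarrow> e2>0 \<longrightarrow> (\<exists>\<rho> y \<xi>. 0<\<rho> \<and> \<rho><\<delta> \<and> dist y xo < e1 \<and> \<bar>\<xi>\<bar> < e2
      \<and> (\<forall>z. u \<rho> z \<le> PhiT z + K * \<psi> z + \<xi>) \<and> PhiT y + K * \<psi> y + \<xi> - \<omega> \<rho> \<le> u \<rho> y))"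
proof -
  have Mu0: "Mu \<ge> 0" using ubnd[of 1 xo] by auto
  have M\<Phi>0: "M\<Phi> \<ge> 0" using \<Phi>bnd[of xo] by auto
  obtain \<eta>r where \<eta>r: "\<eta>r > 0" "\<forall>y. dist y xo \<ge> r \<longrightarrow> \<psi> y \<ge> \<eta>r" using \<psi>low[OF r] by blast
  define K where "K = (Mu + M\<Phi> + 2) / \<eta>r"
  have K0: "K > 0" unfolding K_def using Mu0 M\<Phi>0 \<eta>r by simp
  define \<phi>1 where "\<phi>1 = (\<lambda>z. PhiT z + K * \<psi> z)"
  have far: "u \<rho> y - \<phi>1 y \<le> -2" if "0<\<rho>" "dist y xo \<ge> r" for \<rho> y
  proof -
    have "K * \<psi> y \<ge> K * \<eta>r" using \<eta>r that K0 by (simp add: mult_left_mono)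
    also have "K * \<eta>r = Mu + M\<Phi> + 2" unfolding K_def using \<eta>r by simp
    finally have "K * \<psi> y \<ge> Mu + M\<Phi> + 2" .
    moreover have "u \<rho> y \<le> Mu" "- M\<Phi> \<le> PhiT y" using ubnd[OF that(1), of y] \<Phi>bnd[of y] by auto
    ultimately show ?thesis unfolding \<phi>1_def by linarith
  qed
  have \<phi>1cont: "continuous_on UNIV \<phi>1" unfolding \<phi>1_def
    by (intro continuous_on_add continuous_on_mult_left \<Phi>cont \<psi>cont)
  have \<phi>1xo: "\<phi>1 xo = PhiT xo" unfolding \<phi>1_def using \<psi>xo by simp
  show ?thesis
  proof (rule exI[of _ K], intro allI impI)
    fix \<omega> :: "real \<Rightarrow> real" and \<delta> e1 e2 :: real assume \<omega>pos: "\<forall>\<rho>>0. \<omega> \<rho> > 0" and \<delta>: "\<delta>>0" and e1: "e1>0" and e2: "e2>0"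
    define r' where "r' = min r e1"
    have r': "r' > 0" "r' \<le> r" "r' \<le> e1" unfolding r'_def using r e1 by auto
    obtain \<eta>' where \<eta>': "\<eta>' > 0" "\<forall>y. dist y xo \<ge> r' \<longrightarrow> \<psi> y \<ge> \<eta>'" using \<psi>low[OF r'(1)] by blast
    define \<gamma> where "\<gamma> = min gm (min 1 (K*\<eta>'/2))"
    have \<gamma>: "\<gamma> > 0" "\<gamma> \<le> gm" "\<gamma> \<le> 1" "\<gamma> \<le> K*\<eta>'/2" unfolding \<gamma>_def using gm K0 \<eta>' by auto
    define \<epsilon> where "\<epsilon> = min (e2/2) (K*\<eta>'/2)"
    have \<epsilon>: "\<epsilon> > 0" "\<epsilon> \<le> e2/2" "\<epsilon> \<le> K*\<eta>'/2" unfolding \<epsilon>_def using e2 K0 \<eta>' by auto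
    define S where "S = cball xo r \<inter> C"
    have "compact S" unfolding S_def using Ccl by (intro compact_Int_closed) auto
    moreover have "\<forall>x\<in>S. \<exists>d>0. \<exists>e>0. \<forall>\<rho> y. 0<\<rho> \<longrightarrow> \<rho><d \<longrightarrow> dist y x < e \<longrightarrow> u \<rho> y < PhiT y + \<epsilon>"
      using P1 \<epsilon>(1) unfolding S_def by blast
    ultimately obtain d1 where d1: "d1>0" "\<forall>\<rho> y. 0<\<rho> \<longrightarrow> \<rho><d1 \<longrightarrow> y\<in>S \<longrightarrow> u \<rho> y < PhiT y + \<epsilon>"
      using compact_unif[of S "\<lambda>\<rho> y. u \<rho> y < PhiT y + \<epsilon>"] by blast
    have A: "u \<rho> y - \<phi>1 y \<le> \<epsilon>" and B: "dist y xo \<ge> r' \<Longrightarrow> u \<rho> y - \<phi>1 y \<le> -\<gamma>"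
      if \<rho>: "0<\<rho>" "\<rho><d1" for \<rho> y
    proof -
      have "u \<rho> y - \<phi>1 y \<le> \<epsilon> \<and> (dist y xo \<ge> r' \<longrightarrow> u \<rho> y - \<phi>1 y \<le> -\<gamma>)"
      proof (cases "dist y xo \<le> r")
        case True
        show ?thesis
        proof (cases "y \<in> \<Omega>")
          case yin: True
          then have "y \<in> S" unfolding S_def using True \<Omega>C by (auto simp: dist_commute)
          then have u1: "u \<rho> y < PhiT y + \<epsilon>" using d1 \<rho> by blast
          have "K * \<psi> y \<ge> 0" using K0 \<psi>nn[of y] by simp
          moreover have "dist y xo \<ge> r' \<Longrightarrow> K * \<psi> y \<ge> K * \<eta>'" using \<eta>' K0 by (simp add: mult_left_mono)
          ultimately show ?thesis using u1 \<epsilon> \<gamma> unfolding \<phi>1_def by auto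
        next
          case False
          then have "u \<rho> y \<le> PhiT y - gm" using ext \<rho> True by blast
          moreover have "K * \<psi> y \<ge> 0" using K0 \<psi>nn[of y] by simp
          ultimately show ?thesis using \<epsilon> \<gamma> unfolding \<phi>1_def by auto
        qed
      next
        case False
        then show ?thesis using far[OF \<rho>(1), of y] \<epsilon> \<gamma> by auto
      qed
      then show "u \<rho> y - \<phi>1 y \<le> \<epsilon>" and "dist y xo \<ge> r' \<Longrightarrow> u \<rho> y - \<phi>1 y \<le> -\<gamma>" by auto
    qed
    define \<tau> where "\<tau> = min (\<gamma>/2) (e2/2)"
    have \<tau>: "\<tau> > 0" "\<tau> \<le> \<gamma>/2" "\<tau> \<le> e2/2" unfolding \<tau>_def using \<gamma> e2 by auto
    have "isCont \<phi>1 xo" using \<phi>1cont by (simp add: continuous_on_eq_continuous_at)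
    then obtain e3 where e3: "e3 > 0" "\<forall>y. dist y xo < e3 \<longrightarrow> dist (\<phi>1 y) (\<phi>1 xo) < \<tau>/2"
      unfolding continuous_at_eps_delta using \<tau> by (metis half_gt_zero)
    obtain \<rho> y1 where \<rho>y1: "0<\<rho>" "\<rho> < min \<delta> d1" "dist y1 xo < min r' e3" "u \<rho> y1 > PhiT xo - \<tau>/2"
      using P3[of "\<tau>/2" "min \<delta> d1" "min r' e3"] \<tau> \<delta> d1 r' e3 by auto
    have \<rho>d1: "\<rho> < d1" using \<rho>y1 by auto
    have "dist (\<phi>1 y1) (\<phi>1 xo) < \<tau>/2" using e3 \<rho>y1 by auto
    then have "\<bar>\<phi>1 y1 - \<phi>1 xo\<bar> < \<tau>/2" by (simp only: dist_real_def)
    then have "\<phi>1 y1 - \<phi>1 xo < \<tau>/2" by (simp only: abs_less_iff)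
    then have "\<phi>1 y1 < PhiT xo + \<tau>/2" using \<phi>1xo by linarith
    then have y1: "u \<rho> y1 - \<phi>1 y1 > -\<tau>" using \<rho>y1 by linarith
    let ?f = "\<lambda>z. u \<rho> z - \<phi>1 z"
    define m where "m = (SUP z. ?f z)"
    have bdd: "bdd_above (range ?f)" using A[OF \<rho>y1(1) \<rho>d1] by (intro bdd_aboveI[of _ \<epsilon>]) auto
    have m_ge: "?f z \<le> m" for z unfolding m_def by (rule cSUP_upper[OF _ bdd]) simp
    have m_le: "m \<le> \<epsilon>" unfolding m_def using A[OF \<rho>y1(1) \<rho>d1] by (intro cSUP_least) auto
    have m_gt: "m > -\<tau>" using m_ge[of y1] y1 by linarith
    define \<eta> where "\<eta> = min (\<omega> \<rho>) (\<gamma>/2)"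
    have \<eta>: "\<eta> > 0" "\<eta> \<le> \<omega> \<rho>" "\<eta> \<le> \<gamma>/2" unfolding \<eta>_def using \<omega>pos \<rho>y1(1) \<gamma> by auto
    have "m - \<eta> < (SUP z. ?f z)" using \<eta> unfolding m_def by simp
    then obtain y where y: "m - \<eta> < ?f y" using less_cSUP_iff[OF _ bdd] by blast
    show "\<exists>\<rho> y \<xi>. 0<\<rho> \<and> \<rho><\<delta> \<and> dist y xo < e1 \<and> \<bar>\<xi>\<bar> < e2
      \<and> (\<forall>z. u \<rho> z \<le> PhiT z + K * \<psi> z + \<xi>) \<and> PhiT y + K * \<psi> y + \<xi> - \<omega> \<rho> \<le> u \<rho> y"
    proof -
      have a1: "0 < \<rho>" "\<rho> < \<delta>" using \<rho>y1 by auto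
      have a2: "dist y xo < e1"
      proof (rule ccontr)
        assume "\<not> dist y xo < e1"
        then have "dist y xo \<ge> r'" using r' by auto
        then have "?f y \<le> -\<gamma>" using B[OF \<rho>y1(1) \<rho>d1] by blast
        then show False using y m_gt \<eta> \<tau> by linarith
      qed
      have a3: "\<bar>m\<bar> < e2" using m_le m_gt \<epsilon> \<tau> by auto
      have a4: "\<forall>z. u \<rho> z \<le> PhiT z + K * \<psi> z + m" using m_ge unfolding \<phi>1_def by (simp add: algebra_simps)
      have a5: "PhiT y + K * \<psi> y + m - \<omega> \<rho> \<le> u \<rho> y" using y \<eta> unfolding \<phi>1_def by simp
      show ?thesis using a1 a2 a3 a4 a5 by blast
    qed
  qed
qed



lemma dpp_ext: assumes "dpp_sol \<Omega> X A g \<rho> v" "y \<notin> \<Omega>" shows "v y = g y"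
  using assms unfolding dpp_sol_def dpp_subsol_def dpp_supersol_def by (meson antisym)

lemma pm_pos: "positive_modulus \<omega> \<Longrightarrow> \<forall>\<rho>>0. \<omega> \<rho> > 0"
proof (intro allI impI)
  fix \<rho> :: real assume pm: "positive_modulus \<omega>" and \<rho>: "\<rho> > 0"
  then have "strict_mono_on {0..} \<omega>" "\<omega> 0 = 0" unfolding positive_modulus_def by auto
  moreover have "\<omega> 0 < \<omega> \<rho>" using calculation(1) \<rho> by (auto intro: strict_mono_onD)
  ultimately show "\<omega> \<rho> > 0" by simp
qed

lemma Cb_bc:
  assumes "\<phi> \<in> Cb_inf"
  shows "\<exists>M. \<forall>y. \<bar>\<phi> y\<bar> \<le> M" and "continuous_on UNIV \<phi>"
proof -
  have "Cbk 0 \<phi>" using assms unfolding Cb_inf_def by blast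
  then have "bounded (range \<phi>)" "continuous_on UNIV \<phi>" by auto
  then show "\<exists>M. \<forall>y. \<bar>\<phi> y\<bar> \<le> M" "continuous_on UNIV \<phi>" unfolding bounded_iff by auto
qed

lemma cont_pt:
  fixes \<phi> :: "'a::metric_space \<Rightarrow> real"
  assumes "continuous_on UNIV \<phi>" "\<epsilon> > 0"
  shows "\<exists>e>0. \<forall>y. dist y x < e \<longrightarrow> \<bar>\<phi> y - \<phi> x\<bar> < \<epsilon>"
proof -
  have "isCont \<phi> x" using assms(1) by (simp add: continuous_on_eq_continuous_at)
  then show ?thesis unfolding continuous_at_eps_delta dist_real_def using assms(2) by blast
qed

lemma sch_mono:
  assumes "scheme_assms \<Omega> X A" "\<rho> > 0" "x \<in> \<Omega>" "\<phi> \<in> X" "s1 \<le> s2"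
  shows "A \<rho> x \<phi> s1 \<le> A \<rho> x \<phi> s2"
  using assms unfolding scheme_assms_def by blast

lemma dpp_sub_le:
  assumes "dpp_sol \<Omega> X A g \<rho> v" "x \<in> \<Omega>" "\<phi> \<in> X"
  shows "(\<forall>z. v z \<le> \<phi> z) \<Longrightarrow> A \<rho> x \<phi> (v x) \<le> 0"
  using assms unfolding dpp_sol_def dpp_subsol_def le_fun_def by blast

lemma dpp_super_ge:
  assumes "dpp_sol \<Omega> X A g \<rho> v" "x \<in> \<Omega>" "\<phi> \<in> X"
  shows "(\<forall>z. \<phi> z \<le> v z) \<Longrightarrow> A \<rho> x \<phi> (v x) \<ge> 0"
  using assms unfolding dpp_sol_def dpp_supersol_def le_fun_def by blast

lemma cons_lowE:
  assumes "consistent \<Omega> A g F" "x \<in> closure \<Omega>" "\<phi> \<in> Cb_inf"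
  obtains \<omega> where "positive_modulus \<omega>"
    "Liminf (at_right 0 \<times>\<^sub>F nhds x \<times>\<^sub>F nhds 0)
        (\<lambda>(\<rho>,y,\<xi>). ereal (B_op \<Omega> A g \<rho> y (\<lambda>z. \<phi> z + \<xi>) (\<phi> y + \<xi> - \<omega> \<rho>)))
      \<ge> (if x \<in> \<Omega> then F_lower \<Omega> F x (\<phi> x) (grad \<phi> x) (hess \<phi> x)
          else min (ereal (\<phi> x) - usc_env UNIV g x) (F_lower \<Omega> F x (\<phi> x) (grad \<phi> x) (hess \<phi> x)))"
  using assms unfolding consistent_def by blast

lemma cons_upE:
  assumes "consistent \<Omega> A g F" "x \<in> closure \<Omega>" "\<phi> \<in> Cb_inf"
  obtains \<omega> where "positive_modulus \<omega>"
    "Limsup (at_right 0 \<times>\<^sub>F nhds x \<times>\<^sub>F nhds 0)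
        (\<lambda>(\<rho>,y,\<xi>). ereal (B_op \<Omega> A g \<rho> y (\<lambda>z. \<phi> z + \<xi>) (\<phi> y + \<xi> + \<omega> \<rho>)))
      \<le> (if x \<in> \<Omega> then F_upper \<Omega> F x (\<phi> x) (grad \<phi> x) (hess \<phi> x)
          else max (ereal (\<phi> x) - lsc_env UNIV g x) (F_upper \<Omega> F x (\<phi> x) (grad \<phi> x) (hess \<phi> x)))"
  using assms unfolding consistent_def by blast

lemma sub_main:
  fixes \<Omega> :: "(real^'n::finite) set"
    and X :: "(real^'n \<Rightarrow> real) set"
    and g :: "real^'n \<Rightarrow> real"
    and A :: "real \<Rightarrow> real^'n \<Rightarrow> (real^'n \<Rightarrow> real) \<Rightarrow> real \<Rightarrow> real"
    and F :: "real^'n \<Rightarrow> real \<Rightarrow> real^'n \<Rightarrow> real^'n^'n \<Rightarrow> real"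
    and u :: "real \<Rightarrow> real^'n \<Rightarrow> real"
  assumes \<Omega>o: "open \<Omega>" and CbX: "Cb_inf \<subseteq> X" and sch: "scheme_assms \<Omega> X A"
    and cons: "consistent \<Omega> A g F"
    and sol: "\<And>\<rho>. \<rho> > 0 \<Longrightarrow> dpp_sol \<Omega> X A g \<rho> (u \<rho>)"
    and ubnd: "\<And>\<rho> y. 0<\<rho> \<Longrightarrow> \<bar>u \<rho> y\<bar> \<le> Mu" and gbnd: "\<And>y. \<bar>g y\<bar> \<le> Mg"
  shows "pde_subsol \<Omega> F g (hlim u)"
proof -
  let ?U = "hlim u"
  have Ub: "\<bar>?U x\<bar> \<le> Mu" for x by (rule hl_fin(2)[of u Mu x, OF ubnd])
  have UX: "?U \<in> Xbar" unfolding Xbar_def bounded_iff using Ub by (auto intro!: exI[of _ Mu])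
  have Uusc: "usc_on (closure \<Omega>) ?U" unfolding usc_on_def using hl_usc[of u Mu, OF ubnd] by blast
  have Ueq: "ustar \<Omega> ?U x = ?U x" if "x \<in> closure \<Omega>" for x by (rule ustar_usc_eq[OF Uusc that])
  show ?thesis unfolding pde_subsol_def
  proof (intro conjI UX ballI impI)
    fix \<phi> x0 assume \<phi>: "\<phi> \<in> Cb_inf" and x0: "x0 \<in> closure \<Omega>"
      and mx: "\<forall>y\<in>closure \<Omega>. ustar \<Omega> ?U y - \<phi> y \<le> ustar \<Omega> ?U x0 - \<phi> x0"
    have mx': "?U y - \<phi> y \<le> ?U x0 - \<phi> x0" if "y \<in> closure \<Omega>" for y
      using mx that Ueq[OF x0] Ueq[OF that] by auto
    define RHS where "RHS = (if x0 \<in> \<Omega> then F_lower \<Omega> F x0 (?U x0) (grad \<phi> x0) (hess \<phi> x0)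
       else min (ereal (?U x0) - usc_env UNIV g x0) (F_lower \<Omega> F x0 (?U x0) (grad \<phi> x0) (hess \<phi> x0)))"
    have key: "RHS \<le> 0" if cas: "x0 \<in> \<Omega> \<or> usc_env UNIV g x0 < ereal (?U x0)"
    proof -
      obtain M\<phi> where M\<phi>: "\<And>y. \<bar>\<phi> y\<bar> \<le> M\<phi>" using Cb_bc(1)[OF \<phi>] by blast
      have \<phi>c: "continuous_on UNIV \<phi>" using Cb_bc(2)[OF \<phi>] .
      define c0 where "c0 = ?U x0 - \<phi> x0"
      define \<Phi>2 where "\<Phi>2 = (\<lambda>y. \<phi> y + c0)"
      obtain r \<gamma>0 where r: "r>0" "\<gamma>0>0"
        and ext: "\<And>\<rho> y. 0<\<rho> \<Longrightarrow> dist y x0 \<le> r \<Longrightarrow> y \<notin> \<Omega> \<Longrightarrow> u \<rho> y \<le> \<Phi>2 y - \<gamma>0"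
      proof (cases "x0 \<in> \<Omega>")
        case True
        obtain r0 where r0: "r0>0" "ball x0 r0 \<subseteq> \<Omega>" using \<Omega>o True open_contains_ball by blast
        have "y \<in> \<Omega>" if "dist y x0 \<le> r0/2" for y using r0 that by (auto simp: dist_commute subset_eq)
        then show ?thesis using that[of "r0/2" 1] r0 by force
      next
        case False
        then have gl: "usc_env UNIV g x0 < ereal (?U x0)" using cas by auto
        obtain gs where gs: "usc_env UNIV g x0 = ereal gs"
          using env_fin(1)[where f=g, OF gbnd UNIV_I] by blast
        then have gsl: "gs < ?U x0" using gl by simp
        define \<gamma>0 where "\<gamma>0 = (?U x0 - gs)/4"
        have \<gamma>0: "\<gamma>0 > 0" using gsl by (simp add: \<gamma>0_def)
        have \<gamma>04: "\<gamma>0 * 4 = ?U x0 - gs" by (simp add: \<gamma>0_def)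
        have "usc_env UNIV g x0 < ereal (gs + \<gamma>0)" using gs \<gamma>0 by simp
        then have "eventually (\<lambda>y. ereal (g y) < ereal (gs + \<gamma>0)) (inf (nhds x0) (principal UNIV))"
          unfolding usc_env_def by (rule Limsup_lessD)
        then obtain e1 where e1: "e1>0" "\<forall>y. dist y x0 < e1 \<longrightarrow> g y < gs + \<gamma>0"
          by (auto simp: eventually_nhds_metric)
        obtain e2 where e2: "e2>0" "\<forall>y. dist y x0 < e2 \<longrightarrow> \<bar>\<phi> y - \<phi> x0\<bar> < \<gamma>0"
          using cont_pt[OF \<phi>c \<gamma>0] by blast
        define r where "r = min e1 e2 / 2"
        have r: "r > 0" unfolding r_def using e1 e2 by auto
        have "u \<rho> y \<le> \<Phi>2 y - \<gamma>0" if "0<\<rho>" "dist y x0 \<le> r" "y \<notin> \<Omega>" for \<rho> y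
        proof -
          have "dist y x0 < e1" "dist y x0 < e2" using that(2) r_def e1 e2 by auto
          then have h1: "g y < gs + \<gamma>0" and "\<bar>\<phi> y - \<phi> x0\<bar> < \<gamma>0" using e1 e2 by auto
          then have h2: "- \<gamma>0 < \<phi> y - \<phi> x0" by (simp add: abs_less_iff)
          have "u \<rho> y = g y" using dpp_ext[OF sol[OF that(1)] that(3)] .
          then show ?thesis unfolding \<Phi>2_def c0_def using h1 h2 \<gamma>04 \<gamma>0 by linarith
        qed
        then show ?thesis using that r \<gamma>0 by blast
      qed
      have \<Phi>b: "\<bar>\<Phi>2 y\<bar> \<le> M\<phi> + \<bar>c0\<bar>" for y
        unfolding \<Phi>2_def using M\<phi>[of y] by (metis abs_triangle_ineq add_right_mono order_trans)
      have \<Phi>c: "continuous_on UNIV \<Phi>2" unfolding \<Phi>2_def by (intro continuous_on_add \<phi>c continuous_on_const)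
      have \<psi>low: "\<exists>\<eta>>0. \<forall>y. dist y x0 \<ge> a \<longrightarrow> psi x0 y \<ge> \<eta>" if "a>0" for a
        using psi_lower[of a _ x0] that by (intro exI[of _ "tanh (a / real CARD('n))^4"]) auto
      have P1: "\<exists>d>0. \<exists>e>0. \<forall>\<rho> y. 0<\<rho> \<longrightarrow> \<rho><d \<longrightarrow> dist y yb < e \<longrightarrow> u \<rho> y < \<Phi>2 y + \<epsilon>"
        if yb: "yb \<in> closure \<Omega>" and \<epsilon>: "\<epsilon>>0" for yb \<epsilon>
      proof -
        obtain d e where de: "d>0" "e>0" "\<forall>\<rho> y. 0<\<rho> \<longrightarrow> \<rho><d \<longrightarrow> dist y yb < e \<longrightarrow> u \<rho> y < ?U yb + \<epsilon>/2"
          using hl_upper[of u Mu "\<epsilon>/2" yb, OF ubnd] \<epsilon> by auto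
        obtain e' where e': "e'>0" "\<forall>y. dist y yb < e' \<longrightarrow> \<bar>\<phi> y - \<phi> yb\<bar> < \<epsilon>/2"
          using cont_pt[OF \<phi>c, of "\<epsilon>/2" yb] \<epsilon> by auto
        have Uyb: "?U yb \<le> \<Phi>2 yb" using mx'[OF yb] unfolding \<Phi>2_def c0_def by simp
        have "u \<rho> y < \<Phi>2 y + \<epsilon>" if "0<\<rho>" "\<rho><d" "dist y yb < min e e'" for \<rho> y
        proof -
          have "u \<rho> y < ?U yb + \<epsilon>/2" using de that by auto
          moreover have "\<bar>\<phi> y - \<phi> yb\<bar> < \<epsilon>/2" using e' that by auto
          moreover have "-(\<phi> y - \<phi> yb) \<le> \<bar>\<phi> y - \<phi> yb\<bar>" by (rule abs_ge_minus_self)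
          ultimately show ?thesis using Uyb unfolding \<Phi>2_def by linarith
        qed
        then show ?thesis using de e' by (intro exI[of _ d] conjI exI[of _ "min e e'"]) auto
      qed
      have P3: "\<exists>\<rho> y. 0<\<rho> \<and> \<rho><\<delta> \<and> dist y x0 < e \<and> u \<rho> y > \<Phi>2 x0 - \<tau>"
        if "\<tau>>0" "\<delta>>0" "e>0" for \<tau> \<delta> e
        using hl_freq[of u Mu \<tau> \<delta> e x0, OF ubnd] that unfolding \<Phi>2_def c0_def by simp
      from core[where u=u and Mu=Mu and PhiT=\<Phi>2 and M\<Phi>="M\<phi> + \<bar>c0\<bar>" and \<psi>="psi x0" and xo=x0
            and C="closure \<Omega>" and \<Omega>=\<Omega> and r=r and gm=\<gamma>0,
            OF ubnd \<Phi>b \<Phi>c psi_nonneg psi_at psi_cont \<psi>low closed_closure closure_subset P1 r ext P3]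
      obtain K where K: "\<forall>\<omega>::real\<Rightarrow>real. (\<forall>\<rho>>0. \<omega> \<rho> > 0) \<longrightarrow> (\<forall>\<delta> e1 e2. \<delta>>0 \<longrightarrow> e1>0 \<longrightarrow> e2>0 \<longrightarrow>
          (\<exists>\<rho> y \<xi>. 0<\<rho> \<and> \<rho><\<delta> \<and> dist y x0 < e1 \<and> \<bar>\<xi>\<bar> < e2
             \<and> (\<forall>z. u \<rho> z \<le> \<Phi>2 z + K * psi x0 z + \<xi>) \<and> \<Phi>2 y + K * psi x0 y + \<xi> - \<omega> \<rho> \<le> u \<rho> y))"
        ..
      define \<phi>1 where "\<phi>1 = (\<lambda>y. \<phi> y + (c0 + K * psi x0 y))"
      have \<phi>1Cb: "\<phi>1 \<in> Cb_inf" and gr: "grad \<phi>1 x0 = grad \<phi> x0" and he: "hess \<phi>1 x0 = hess \<phi> x0"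
        and v0: "\<phi>1 x0 = ?U x0" and \<phi>1\<xi>: "\<And>\<xi>. (\<lambda>z. \<phi>1 z + \<xi>) \<in> Cb_inf"
        using test_fun[OF \<phi>, where c=c0 and K=K and a=x0] unfolding \<phi>1_def c0_def by auto
      obtain \<omega> where pm: "positive_modulus \<omega>" and lim:
        "Liminf (at_right 0 \<times>\<^sub>F nhds x0 \<times>\<^sub>F nhds 0)
          (\<lambda>(\<rho>,y,\<xi>). ereal (B_op \<Omega> A g \<rho> y (\<lambda>z. \<phi>1 z + \<xi>) (\<phi>1 y + \<xi> - \<omega> \<rho>)))
        \<ge> (if x0 \<in> \<Omega> then F_lower \<Omega> F x0 (\<phi>1 x0) (grad \<phi>1 x0) (hess \<phi>1 x0)
          else min (ereal (\<phi>1 x0) - usc_env UNIV g x0) (F_lower \<Omega> F x0 (\<phi>1 x0) (grad \<phi>1 x0) (hess \<phi>1 x0)))"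
        by (rule cons_lowE[OF cons x0 \<phi>1Cb])
      have \<omega>pos: "\<forall>\<rho>>0. \<omega> \<rho> > 0" by (rule pm_pos[OF pm])
      have Lle: "Liminf (at_right 0 \<times>\<^sub>F nhds x0 \<times>\<^sub>F nhds 0)
          (\<lambda>(\<rho>,y,\<xi>). ereal (B_op \<Omega> A g \<rho> y (\<lambda>z. \<phi>1 z + \<xi>) (\<phi>1 y + \<xi> - \<omega> \<rho>))) \<le> 0"
      proof (rule Liminf_le_freq)
        fix P :: "real \<times> (real^'n) \<times> real \<Rightarrow> bool" assume "eventually P (at_right 0 \<times>\<^sub>F nhds x0 \<times>\<^sub>F nhds 0)"
        from ev_prod3[OF this] obtain d e1 e2 where box: "d>0" "e1>0" "e2>0"
          "\<forall>\<rho> y \<xi>. 0<\<rho> \<longrightarrow> \<rho><d \<longrightarrow> dist y x0 < e1 \<longrightarrow> \<bar>\<xi>\<bar> < e2 \<longrightarrow> P (\<rho>,y,\<xi>)" by blast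
        from K[THEN spec[where x=\<omega>], THEN mp, OF \<omega>pos, rule_format, OF box(1) box(2) box(3)] obtain \<rho> y \<xi> where pt: "0<\<rho>" "\<rho><d" "dist y x0 < e1" "\<bar>\<xi>\<bar> < e2"
          "\<forall>z. u \<rho> z \<le> \<Phi>2 z + K * psi x0 z + \<xi>" "\<Phi>2 y + K * psi x0 y + \<xi> - \<omega> \<rho> \<le> u \<rho> y"
          by blast
        have up: "\<forall>z. u \<rho> z \<le> \<phi>1 z + \<xi>" using pt(5) unfolding \<phi>1_def \<Phi>2_def by (simp add: algebra_simps)
        have lo: "\<phi>1 y + \<xi> - \<omega> \<rho> \<le> u \<rho> y" using pt(6) unfolding \<phi>1_def \<Phi>2_def by (simp add: algebra_simps)
        have "B_op \<Omega> A g \<rho> y (\<lambda>z. \<phi>1 z + \<xi>) (\<phi>1 y + \<xi> - \<omega> \<rho>) \<le> 0"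
        proof (cases "y \<in> \<Omega>")
          case True
          have tX: "(\<lambda>z. \<phi>1 z + \<xi>) \<in> X" using \<phi>1\<xi> CbX by blast
          have "A \<rho> y (\<lambda>z. \<phi>1 z + \<xi>) (\<phi>1 y + \<xi> - \<omega> \<rho>) \<le> A \<rho> y (\<lambda>z. \<phi>1 z + \<xi>) (u \<rho> y)"
            using sch_mono[OF sch pt(1) True tX lo] .
          also have "\<dots> \<le> 0" using dpp_sub_le[OF sol[OF pt(1)] True tX] up by blast
          finally show ?thesis using True unfolding B_op_def by simp
        next
          case False
          then show ?thesis using lo dpp_ext[OF sol[OF pt(1)] False] unfolding B_op_def by simp
        qed
        moreover have "P (\<rho>,y,\<xi>)" using box(4) pt by blast
        ultimately show "\<exists>z. P z \<and> (\<lambda>(\<rho>,y,\<xi>). ereal (B_op \<Omega> A g \<rho> y (\<lambda>z. \<phi>1 z + \<xi>) (\<phi>1 y + \<xi> - \<omega> \<rho>))) z \<le> 0"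
          by (intro exI[of _ "(\<rho>,y,\<xi>)"]) simp
      qed
      show "RHS \<le> 0" using order_trans[OF lim Lle] unfolding RHS_def v0 gr he .
    qed
    show "if x0 \<in> \<Omega> then F_lower \<Omega> F x0 (ustar \<Omega> ?U x0) (grad \<phi> x0) (hess \<phi> x0) \<le> 0
       else min (ereal (ustar \<Omega> ?U x0) - usc_env UNIV g x0)
                (F_lower \<Omega> F x0 (ustar \<Omega> ?U x0) (grad \<phi> x0) (hess \<phi> x0)) \<le> 0"
    proof (cases "x0 \<in> \<Omega> \<or> usc_env UNIV g x0 < ereal (?U x0)")
      case True
      then show ?thesis using key[OF True] unfolding RHS_def Ueq[OF x0] by (auto split: if_split_asm)
    next
      case False
      then have "ereal (?U x0) - usc_env UNIV g x0 \<le> 0"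
        by (cases "usc_env UNIV g x0") auto
      then show ?thesis using False unfolding Ueq[OF x0] by (simp add: min_le_iff_disj)
    qed
  qed
qed



lemma super_main:
  fixes \<Omega> :: "(real^'n::finite) set"
    and X :: "(real^'n \<Rightarrow> real) set"
    and g :: "real^'n \<Rightarrow> real"
    and A :: "real \<Rightarrow> real^'n \<Rightarrow> (real^'n \<Rightarrow> real) \<Rightarrow> real \<Rightarrow> real"
    and F :: "real^'n \<Rightarrow> real \<Rightarrow> real^'n \<Rightarrow> real^'n^'n \<Rightarrow> real"
    and u :: "real \<Rightarrow> real^'n \<Rightarrow> real"
  assumes \<Omega>o: "open \<Omega>" and CbX: "Cb_inf \<subseteq> X" and sch: "scheme_assms \<Omega> X A"
    and cons: "consistent \<Omega> A g F"
    and sol: "\<And>\<rho>. \<rho> > 0 \<Longrightarrow> dpp_sol \<Omega> X A g \<rho> (u \<rho>)"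
    and ubnd: "\<And>\<rho> y. 0<\<rho> \<Longrightarrow> \<bar>u \<rho> y\<bar> \<le> Mu" and gbnd: "\<And>y. \<bar>g y\<bar> \<le> Mg"
  shows "pde_supersol \<Omega> F g (\<lambda>x. - hlim (\<lambda>\<rho> y. - u \<rho> y) x)"
proof -
  define nu where "nu = (\<lambda>\<rho> y. - u \<rho> y)"
  have nubnd: "\<And>\<rho> y. 0<\<rho> \<Longrightarrow> \<bar>nu \<rho> y\<bar> \<le> Mu" unfolding nu_def using ubnd by simp
  define L where "L = (\<lambda>x. - hlim nu x)"
  have Lb: "\<bar>L x\<bar> \<le> Mu" for x unfolding L_def using hl_fin(2)[of nu Mu x, OF nubnd] by simp
  have LX: "L \<in> Xbar" unfolding Xbar_def bounded_iff using Lb by (auto intro!: exI[of _ Mu])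
  have nL: "(\<lambda>y. - L y) = hlim nu" unfolding L_def by simp
  have Nusc: "usc_on (closure \<Omega>) (hlim nu)" unfolding usc_on_def using hl_usc[of nu Mu, OF nubnd] by blast
  have Llsc: "lsc_on (closure \<Omega>) L" unfolding lsc_on_neg nL by (rule Nusc)
  have Leq: "lstar \<Omega> L x = L x" if "x \<in> closure \<Omega>" for x
    unfolding lstar_neg nL using ustar_usc_eq[OF Nusc that] unfolding L_def by simp
  have goal_form: "(\<lambda>x. - hlim (\<lambda>\<rho> y. - u \<rho> y) x) = L" unfolding L_def nu_def ..
  show ?thesis unfolding goal_form pde_supersol_def
  proof (intro conjI LX ballI impI)
    fix \<phi> x0 assume \<phi>: "\<phi> \<in> Cb_inf" and x0: "x0 \<in> closure \<Omega>"
      and mn: "\<forall>y\<in>closure \<Omega>. lstar \<Omega> L x0 - \<phi> x0 \<le> lstar \<Omega> L y - \<phi> y"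
    have mn': "L x0 - \<phi> x0 \<le> L y - \<phi> y" if "y \<in> closure \<Omega>" for y
      using mn that Leq[OF x0] Leq[OF that] by auto
    define RHS where "RHS = (if x0 \<in> \<Omega> then F_upper \<Omega> F x0 (L x0) (grad \<phi> x0) (hess \<phi> x0)
       else max (ereal (L x0) - lsc_env UNIV g x0) (F_upper \<Omega> F x0 (L x0) (grad \<phi> x0) (hess \<phi> x0)))"
    have key: "RHS \<ge> 0" if cas: "x0 \<in> \<Omega> \<or> lsc_env UNIV g x0 > ereal (L x0)"
    proof -
      obtain M\<phi> where M\<phi>: "\<And>y. \<bar>\<phi> y\<bar> \<le> M\<phi>" using Cb_bc(1)[OF \<phi>] by blast
      have \<phi>c: "continuous_on UNIV \<phi>" using Cb_bc(2)[OF \<phi>] .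
      define c0 where "c0 = L x0 - \<phi> x0"
      define \<Phi>2 where "\<Phi>2 = (\<lambda>y. \<phi> y + c0)"
      define PhiN where "PhiN = (\<lambda>y. - \<Phi>2 y)"
      obtain r \<gamma>0 where r: "r>0" "\<gamma>0>0"
        and ext: "\<And>\<rho> y. 0<\<rho> \<Longrightarrow> dist y x0 \<le> r \<Longrightarrow> y \<notin> \<Omega> \<Longrightarrow> nu \<rho> y \<le> PhiN y - \<gamma>0"
      proof (cases "x0 \<in> \<Omega>")
        case True
        obtain r0 where r0: "r0>0" "ball x0 r0 \<subseteq> \<Omega>" using \<Omega>o True open_contains_ball by blast
        have "y \<in> \<Omega>" if "dist y x0 \<le> r0/2" for y using r0 that by (auto simp: dist_commute subset_eq)
        then show ?thesis using that[of "r0/2" 1] r0 by force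
      next
        case False
        then have gl: "lsc_env UNIV g x0 > ereal (L x0)" using cas by auto
        have gnb: "\<And>y. \<bar>- g y\<bar> \<le> Mg" using gbnd by simp
        obtain gs' where gs': "usc_env UNIV (\<lambda>y. - g y) x0 = ereal gs'"
          using env_fin(1)[where f="\<lambda>y. - g y", OF gnb UNIV_I] by blast
        define gs where "gs = - gs'"
        have gs: "lsc_env UNIV g x0 = ereal gs" unfolding lsc_env_neg gs' gs_def by simp
        then have gsl: "gs > L x0" using gl by simp
        define \<gamma>0 where "\<gamma>0 = (gs - L x0)/4"
        have \<gamma>0: "\<gamma>0 > 0" using gsl by (simp add: \<gamma>0_def)
        have \<gamma>04: "\<gamma>0 * 4 = gs - L x0" by (simp add: \<gamma>0_def)
        have "ereal (gs - \<gamma>0) < lsc_env UNIV g x0" using gs \<gamma>0 by simp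
        then have "eventually (\<lambda>y. ereal (g y) > ereal (gs - \<gamma>0)) (inf (nhds x0) (principal UNIV))"
          unfolding lsc_env_def by (rule less_LiminfD)
        then obtain e1 where e1: "e1>0" "\<forall>y. dist y x0 < e1 \<longrightarrow> g y > gs - \<gamma>0"
          by (auto simp: eventually_nhds_metric)
        obtain e2 where e2: "e2>0" "\<forall>y. dist y x0 < e2 \<longrightarrow> \<bar>\<phi> y - \<phi> x0\<bar> < \<gamma>0"
          using cont_pt[OF \<phi>c \<gamma>0] by blast
        define r where "r = min e1 e2 / 2"
        have r: "r > 0" unfolding r_def using e1 e2 by auto
        have "nu \<rho> y \<le> PhiN y - \<gamma>0" if "0<\<rho>" "dist y x0 \<le> r" "y \<notin> \<Omega>" for \<rho> y
        proof -
          have "dist y x0 < e1" "dist y x0 < e2" using that(2) r_def e1 e2 by auto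
          then have h1: "g y > gs - \<gamma>0" and "\<bar>\<phi> y - \<phi> x0\<bar> < \<gamma>0" using e1 e2 by auto
          moreover have "\<phi> y - \<phi> x0 \<le> \<bar>\<phi> y - \<phi> x0\<bar>" by (rule abs_ge_self)
          ultimately have h2: "\<phi> y - \<phi> x0 < \<gamma>0" by linarith
          have "u \<rho> y = g y" using dpp_ext[OF sol[OF that(1)] that(3)] .
          then show ?thesis unfolding nu_def PhiN_def \<Phi>2_def c0_def using h1 h2 \<gamma>04 \<gamma>0 by linarith
        qed
        then show ?thesis using that r \<gamma>0 by blast
      qed
      have \<Phi>b: "\<bar>PhiN y\<bar> \<le> M\<phi> + \<bar>c0\<bar>" for y
        unfolding PhiN_def \<Phi>2_def abs_minus_cancel using M\<phi>[of y] by (metis abs_triangle_ineq add_right_mono order_trans)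
      have \<Phi>c: "continuous_on UNIV PhiN" unfolding PhiN_def \<Phi>2_def
        by (intro continuous_on_minus continuous_on_add \<phi>c continuous_on_const)
      have \<psi>low: "\<exists>\<eta>>0. \<forall>y. dist y x0 \<ge> a \<longrightarrow> psi x0 y \<ge> \<eta>" if "a>0" for a
        using psi_lower[of a _ x0] that by (intro exI[of _ "tanh (a / real CARD('n))^4"]) auto
      have P1: "\<exists>d>0. \<exists>e>0. \<forall>\<rho> y. 0<\<rho> \<longrightarrow> \<rho><d \<longrightarrow> dist y yb < e \<longrightarrow> nu \<rho> y < PhiN y + \<epsilon>"
        if yb: "yb \<in> closure \<Omega>" and \<epsilon>: "\<epsilon>>0" for yb \<epsilon>
      proof -
        obtain d e where de: "d>0" "e>0" "\<forall>\<rho> y. 0<\<rho> \<longrightarrow> \<rho><d \<longrightarrow> dist y yb < e \<longrightarrow> nu \<rho> y < hlim nu yb + \<epsilon>/2"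
          using hl_upper[of nu Mu "\<epsilon>/2" yb, OF nubnd] \<epsilon> by auto
        obtain e' where e': "e'>0" "\<forall>y. dist y yb < e' \<longrightarrow> \<bar>\<phi> y - \<phi> yb\<bar> < \<epsilon>/2"
          using cont_pt[OF \<phi>c, of "\<epsilon>/2" yb] \<epsilon> by auto
        have Uyb: "hlim nu yb \<le> PhiN yb" using mn'[OF yb] unfolding PhiN_def \<Phi>2_def c0_def L_def by simp
        have "nu \<rho> y < PhiN y + \<epsilon>" if "0<\<rho>" "\<rho><d" "dist y yb < min e e'" for \<rho> y
        proof -
          have "nu \<rho> y < hlim nu yb + \<epsilon>/2" using de that by auto
          moreover have "\<bar>\<phi> y - \<phi> yb\<bar> < \<epsilon>/2" using e' that by auto
          moreover have "\<phi> y - \<phi> yb \<le> \<bar>\<phi> y - \<phi> yb\<bar>" by (rule abs_ge_self)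
          ultimately show ?thesis using Uyb unfolding PhiN_def \<Phi>2_def by linarith
        qed
        then show ?thesis using de e' by (intro exI[of _ d] conjI exI[of _ "min e e'"]) auto
      qed
      have P3: "\<exists>\<rho> y. 0<\<rho> \<and> \<rho><\<delta> \<and> dist y x0 < e \<and> nu \<rho> y > PhiN x0 - \<tau>"
        if "\<tau>>0" "\<delta>>0" "e>0" for \<tau> \<delta> e
        using hl_freq[of nu Mu \<tau> \<delta> e x0, OF nubnd] that unfolding PhiN_def \<Phi>2_def c0_def L_def by simp
      from core[where u=nu and Mu=Mu and PhiT=PhiN and M\<Phi>="M\<phi> + \<bar>c0\<bar>" and \<psi>="psi x0" and xo=x0
            and C="closure \<Omega>" and \<Omega>=\<Omega> and r=r and gm=\<gamma>0,
            OF nubnd \<Phi>b \<Phi>c psi_nonneg psi_at psi_cont \<psi>low closed_closure closure_subset P1 r ext P3]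
      obtain K where K: "\<forall>\<omega>::real\<Rightarrow>real. (\<forall>\<rho>>0. \<omega> \<rho> > 0) \<longrightarrow> (\<forall>\<delta> e1 e2. \<delta>>0 \<longrightarrow> e1>0 \<longrightarrow> e2>0 \<longrightarrow>
          (\<exists>\<rho> y \<xi>. 0<\<rho> \<and> \<rho><\<delta> \<and> dist y x0 < e1 \<and> \<bar>\<xi>\<bar> < e2
             \<and> (\<forall>z. nu \<rho> z \<le> PhiN z + K * psi x0 z + \<xi>) \<and> PhiN y + K * psi x0 y + \<xi> - \<omega> \<rho> \<le> nu \<rho> y))"
        ..
      define \<phi>1 where "\<phi>1 = (\<lambda>y. \<phi> y + (c0 + (-K) * psi x0 y))"
      have \<phi>1Cb: "\<phi>1 \<in> Cb_inf" and gr: "grad \<phi>1 x0 = grad \<phi> x0" and he: "hess \<phi>1 x0 = hess \<phi> x0"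
        and v0: "\<phi>1 x0 = L x0" and \<phi>1\<xi>: "\<And>\<xi>. (\<lambda>z. \<phi>1 z + \<xi>) \<in> Cb_inf"
        using test_fun[OF \<phi>, where c=c0 and K="-K" and a=x0] unfolding \<phi>1_def c0_def by auto
      obtain \<omega> where pm: "positive_modulus \<omega>" and lim:
        "Limsup (at_right 0 \<times>\<^sub>F nhds x0 \<times>\<^sub>F nhds 0)
          (\<lambda>(\<rho>,y,\<xi>). ereal (B_op \<Omega> A g \<rho> y (\<lambda>z. \<phi>1 z + \<xi>) (\<phi>1 y + \<xi> + \<omega> \<rho>)))
        \<le> (if x0 \<in> \<Omega> then F_upper \<Omega> F x0 (\<phi>1 x0) (grad \<phi>1 x0) (hess \<phi>1 x0)
          else max (ereal (\<phi>1 x0) - lsc_env UNIV g x0) (F_upper \<Omega> F x0 (\<phi>1 x0) (grad \<phi>1 x0) (hess \<phi>1 x0)))"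
        by (rule cons_upE[OF cons x0 \<phi>1Cb])
      have \<omega>pos: "\<forall>\<rho>>0. \<omega> \<rho> > 0" by (rule pm_pos[OF pm])
      have Lge: "0 \<le> Limsup (at_right 0 \<times>\<^sub>F nhds x0 \<times>\<^sub>F nhds 0)
          (\<lambda>(\<rho>,y,\<xi>). ereal (B_op \<Omega> A g \<rho> y (\<lambda>z. \<phi>1 z + \<xi>) (\<phi>1 y + \<xi> + \<omega> \<rho>)))"
      proof (rule Limsup_ge_freq)
        fix P :: "real \<times> (real^'n) \<times> real \<Rightarrow> bool" assume "eventually P (at_right 0 \<times>\<^sub>F nhds x0 \<times>\<^sub>F nhds 0)"
        from ev_prod3[OF this] obtain d e1 e2 where box: "d>0" "e1>0" "e2>0"
          "\<forall>\<rho> y \<xi>. 0<\<rho> \<longrightarrow> \<rho><d \<longrightarrow> dist y x0 < e1 \<longrightarrow> \<bar>\<xi>\<bar> < e2 \<longrightarrow> P (\<rho>,y,\<xi>)" by blast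
        from K[THEN spec[where x=\<omega>], THEN mp, OF \<omega>pos, rule_format, OF box(1) box(2) box(3)]
        obtain \<rho> y \<xi> where pt: "0<\<rho>" "\<rho><d" "dist y x0 < e1" "\<bar>\<xi>\<bar> < e2"
          "\<forall>z. nu \<rho> z \<le> PhiN z + K * psi x0 z + \<xi>" "PhiN y + K * psi x0 y + \<xi> - \<omega> \<rho> \<le> nu \<rho> y"
          by blast
        have up: "\<forall>z. \<phi>1 z + - \<xi> \<le> u \<rho> z" using pt(5) unfolding \<phi>1_def PhiN_def \<Phi>2_def nu_def by (simp add: algebra_simps)
        have lo: "u \<rho> y \<le> \<phi>1 y + - \<xi> + \<omega> \<rho>" using pt(6) unfolding \<phi>1_def PhiN_def \<Phi>2_def nu_def by (simp add: algebra_simps)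
        have "B_op \<Omega> A g \<rho> y (\<lambda>z. \<phi>1 z + - \<xi>) (\<phi>1 y + - \<xi> + \<omega> \<rho>) \<ge> 0"
        proof (cases "y \<in> \<Omega>")
          case True
          have tX: "(\<lambda>z. \<phi>1 z + - \<xi>) \<in> X" using \<phi>1\<xi> CbX by blast
          have "0 \<le> A \<rho> y (\<lambda>z. \<phi>1 z + - \<xi>) (u \<rho> y)" using dpp_super_ge[OF sol[OF pt(1)] True tX] up by blast
          also have "\<dots> \<le> A \<rho> y (\<lambda>z. \<phi>1 z + - \<xi>) (\<phi>1 y + - \<xi> + \<omega> \<rho>)"
            using sch_mono[OF sch pt(1) True tX lo] .
          finally show ?thesis using True unfolding B_op_def by simp
        next
          case False
          then show ?thesis using lo dpp_ext[OF sol[OF pt(1)] False] unfolding B_op_def by simp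
        qed
        moreover have "P (\<rho>,y,- \<xi>)" using box(4) pt by simp
        ultimately show "\<exists>z. P z \<and> 0 \<le> (\<lambda>(\<rho>,y,\<xi>). ereal (B_op \<Omega> A g \<rho> y (\<lambda>z. \<phi>1 z + \<xi>) (\<phi>1 y + \<xi> + \<omega> \<rho>))) z"
          by (intro exI[of _ "(\<rho>,y,- \<xi>)"]) simp
      qed
      show "RHS \<ge> 0" using order_trans[OF Lge lim] unfolding RHS_def v0 gr he .
    qed
    show "if x0 \<in> \<Omega> then 0 \<le> F_upper \<Omega> F x0 (lstar \<Omega> L x0) (grad \<phi> x0) (hess \<phi> x0)
       else 0 \<le> max (ereal (lstar \<Omega> L x0) - lsc_env UNIV g x0)
                (F_upper \<Omega> F x0 (lstar \<Omega> L x0) (grad \<phi> x0) (hess \<phi> x0))"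
    proof (cases "x0 \<in> \<Omega> \<or> lsc_env UNIV g x0 > ereal (L x0)")
      case True
      then show ?thesis using key[OF True] unfolding RHS_def Leq[OF x0] by (auto split: if_split_asm)
    next
      case False
      then have "ereal (L x0) - lsc_env UNIV g x0 \<ge> 0"
        by (cases "lsc_env UNIV g x0") auto
      then show ?thesis using False unfolding Leq[OF x0] by (simp add: le_max_iff_disj)
    qed
  qed
qed



lemma L_le_U:
  assumes ubnd: "\<And>\<rho> y. 0<\<rho> \<Longrightarrow> \<bar>u \<rho> y\<bar> \<le> Mu"
  shows "- hlim (\<lambda>\<rho> y. - u \<rho> y) x \<le> hlim u x"
proof -
  define nu where "nu = (\<lambda>\<rho> y. - u \<rho> y)"
  have nubnd: "\<And>\<rho> y. 0<\<rho> \<Longrightarrow> \<bar>nu \<rho> y\<bar> \<le> Mu" unfolding nu_def using ubnd by simp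
  have "- hlim nu x \<le> hlim u x"
  proof (rule field_le_epsilon)
    fix e :: real assume e: "e > 0"
    obtain d1 e1 where 1: "d1>0" "e1>0" "\<forall>\<rho> y. 0<\<rho> \<longrightarrow> \<rho><d1 \<longrightarrow> dist y x < e1 \<longrightarrow> u \<rho> y < hlim u x + e/2"
      using hl_upper[of u Mu "e/2" x, OF ubnd] e by auto
    obtain d2 e2 where 2: "d2>0" "e2>0" "\<forall>\<rho> y. 0<\<rho> \<longrightarrow> \<rho><d2 \<longrightarrow> dist y x < e2 \<longrightarrow> nu \<rho> y < hlim nu x + e/2"
      using hl_upper[of nu Mu "e/2" x, OF nubnd] e by auto
    define \<rho> where "\<rho> = min d1 d2 / 2"
    have r: "0 < \<rho>" "\<rho> < d1" "\<rho> < d2" unfolding \<rho>_def using 1 2 by auto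
    have "u \<rho> x < hlim u x + e/2" using 1(2,3) r by simp
    moreover have "nu \<rho> x < hlim nu x + e/2" using 2(2,3) r by simp
    ultimately show "- hlim nu x \<le> hlim u x + e" unfolding nu_def by simp
  qed
  then show ?thesis unfolding nu_def .
qed

lemma sub_xbar: "w \<in> Xbar \<Longrightarrow> \<exists>B. \<forall>y. \<bar>w y\<bar> \<le> B"
  unfolding Xbar_def bounded_iff by auto

lemma ustar_sub:
  fixes w :: "real^'n::finite \<Rightarrow> real"
  assumes "pde_subsol \<Omega> F g w"
  shows "pde_subsol \<Omega> F g (ustar \<Omega> w)" "usc_on (closure \<Omega>) (ustar \<Omega> w)"
    "\<And>x. x \<in> closure \<Omega> \<Longrightarrow> w x \<le> ustar \<Omega> w x"
proof -
  have wX: "w \<in> Xbar" using conjunct1[OF assms[unfolded pde_subsol_def]] .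
  obtain B where B: "\<And>y. \<bar>w y\<bar> \<le> B" using sub_xbar[OF wX] by blast
  have "\<bar>ustar \<Omega> w y\<bar> \<le> B" for y
  proof (cases "y \<in> closure \<Omega>")
    case True then show ?thesis using ustar_props(1)[where w=w, OF B True] by blast
  next
    case False then show ?thesis using ustar_props(2)[where w=w, OF B False] B[of y] by simp
  qed
  then have uX: "ustar \<Omega> w \<in> Xbar" unfolding Xbar_def bounded_iff by auto
  show "pde_subsol \<Omega> F g (ustar \<Omega> w)"
    unfolding pde_subsol_def ustar_idem[where w=w, OF B]
    using uX conjunct2[OF assms[unfolded pde_subsol_def]] by (rule conjI)
  show "usc_on (closure \<Omega>) (ustar \<Omega> w)" by (rule ustar_props(3)[where w=w, OF B])
  show "\<And>x. x \<in> closure \<Omega> \<Longrightarrow> w x \<le> ustar \<Omega> w x" using ustar_props(1)[where w=w, OF B] by blast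
qed

lemma lstar_super:
  fixes w :: "real^'n::finite \<Rightarrow> real"
  assumes "pde_supersol \<Omega> F g w"
  shows "pde_supersol \<Omega> F g (lstar \<Omega> w)" "lsc_on (closure \<Omega>) (lstar \<Omega> w)"
    "\<And>x. x \<in> closure \<Omega> \<Longrightarrow> lstar \<Omega> w x \<le> w x"
proof -
  have wX: "w \<in> Xbar" using conjunct1[OF assms[unfolded pde_supersol_def]] .
  obtain B where B: "\<And>y. \<bar>w y\<bar> \<le> B" using sub_xbar[OF wX] by blast
  have B': "\<And>y. \<bar>- w y\<bar> \<le> B" using B by simp
  have ls: "lstar \<Omega> w = (\<lambda>x. - ustar \<Omega> (\<lambda>y. - w y) x)" by (rule lstar_neg)
  have "\<bar>ustar \<Omega> (\<lambda>y. - w y) y\<bar> \<le> B" for y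
  proof (cases "y \<in> closure \<Omega>")
    case True then show ?thesis using ustar_props(1)[where w="\<lambda>y. - w y", OF B' True] by blast
  next
    case False then show ?thesis using ustar_props(2)[where w="\<lambda>y. - w y", OF B' False] B[of y] by simp
  qed
  then have lX: "lstar \<Omega> w \<in> Xbar" unfolding Xbar_def bounded_iff ls by auto
  have eq: "lstar \<Omega> (lstar \<Omega> w) = lstar \<Omega> w"
    unfolding lstar_neg[of \<Omega> "lstar \<Omega> w"] unfolding ls by (simp add: ustar_idem[where w="\<lambda>y. - w y", OF B'])
  show "pde_supersol \<Omega> F g (lstar \<Omega> w)"
    unfolding pde_supersol_def eq
    using lX conjunct2[OF assms[unfolded pde_supersol_def]] by (rule conjI)
  show "lsc_on (closure \<Omega>) (lstar \<Omega> w)" unfolding ls lsc_on_neg by (simp add: ustar_props(3)[where w="\<lambda>y. - w y", OF B'])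
  show "lstar \<Omega> w x \<le> w x" if "x \<in> closure \<Omega>" for x
  proof -
    have "- w x \<le> ustar \<Omega> (\<lambda>y. - w y) x" using ustar_props(1)[where w="\<lambda>y. - w y", OF B' that] by blast
    then show ?thesis unfolding ls by simp
  qed
qed

theorem mainTheorem4:
  fixes \<Omega> :: "(real^'n::finite) set"
    and X :: "(real^'n \<Rightarrow> real) set"
    and g :: "real^'n \<Rightarrow> real"
    and A :: "real \<Rightarrow> real^'n \<Rightarrow> (real^'n \<Rightarrow> real) \<Rightarrow> real \<Rightarrow> real"
    and F :: "real^'n \<Rightarrow> real \<Rightarrow> real^'n \<Rightarrow> real^'n^'n \<Rightarrow> real"
    and u :: "real \<Rightarrow> real^'n \<Rightarrow> real"
  assumes "open \<Omega>"
    and "X \<subseteq> Xbar" and "Cb_inf \<subseteq> X"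
    and "g \<in> Xbar"
    and "proper_F \<Omega> F" and "elliptic_F \<Omega> F"
    and "scheme_assms \<Omega> X A"
    and "consistent \<Omega> A g F"
    and "\<And>\<rho>. \<rho> > 0 \<Longrightarrow> dpp_sol \<Omega> X A g \<rho> (u \<rho>)"
    and "\<exists>M. \<forall>\<rho>>0. \<forall>x. \<bar>u \<rho> x\<bar> \<le> M"
    and "strong_uniqueness \<Omega> F g"
  shows "\<exists>v. pde_sol \<Omega> F g v
           \<and> (\<forall>w. pde_sol \<Omega> F g w \<longrightarrow> (\<forall>x\<in>closure \<Omega>. w x = v x))
           \<and> (\<forall>K. compact K \<and> K \<subseteq> closure \<Omega> \<longrightarrow> uniform_limit K u v (at_right 0))"
proof -
  obtain Mu where ubnd: "\<And>\<rho> y. 0<\<rho> \<Longrightarrow> \<bar>u \<rho> y\<bar> \<le> Mu" using assms(10) by blast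
  obtain Mg where gbnd: "\<And>y. \<bar>g y\<bar> \<le> Mg" using sub_xbar[OF assms(4)] by blast
  define nu where "nu = (\<lambda>\<rho> y. - u \<rho> y)"
  have nubnd: "\<And>\<rho> y. 0<\<rho> \<Longrightarrow> \<bar>nu \<rho> y\<bar> \<le> Mu" unfolding nu_def using ubnd by simp
  define U where "U = hlim u"
  define L where "L = (\<lambda>x. - hlim nu x)"
  have subU: "pde_subsol \<Omega> F g U" unfolding U_def
    by (rule sub_main[OF assms(1,3,7,8,9) ubnd gbnd])
  have supL: "pde_supersol \<Omega> F g L" unfolding L_def nu_def
    by (rule super_main[OF assms(1,3,7,8,9) ubnd gbnd])
  have uscU: "usc_on (closure \<Omega>) U" unfolding usc_on_def U_def using hl_usc[of u Mu, OF ubnd] by blast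
  have nL: "(\<lambda>y. - L y) = hlim nu" unfolding L_def by simp
  have lscL: "lsc_on (closure \<Omega>) L" unfolding lsc_on_neg nL usc_on_def
    using hl_usc[of nu Mu, OF nubnd] by blast
  have SU: "\<forall>u v. pde_subsol \<Omega> F g u \<and> usc_on (closure \<Omega>) u \<and>
           pde_supersol \<Omega> F g v \<and> lsc_on (closure \<Omega>) v \<longrightarrow> (\<forall>x\<in>closure \<Omega>. u x \<le> v x)"
    using assms(11) unfolding strong_uniqueness_def .
  have SUa: "\<And>u v x. pde_subsol \<Omega> F g u \<Longrightarrow> usc_on (closure \<Omega>) u \<Longrightarrow>
           pde_supersol \<Omega> F g v \<Longrightarrow> lsc_on (closure \<Omega>) v \<Longrightarrow> x\<in>closure \<Omega> \<Longrightarrow> u x \<le> v x"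
    using SU by blast
  have UL: "U x \<le> L x" if "x \<in> closure \<Omega>" for x by (rule SUa[OF subU uscU supL lscL that])
  have LU: "L x \<le> U x" for x unfolding L_def U_def nu_def by (rule L_le_U[OF ubnd])
  have eqUL: "U x = L x" if "x \<in> closure \<Omega>" for x using UL[OF that] LU[of x] by simp
  have UX: "U \<in> Xbar" using conjunct1[OF subU[unfolded pde_subsol_def]] .
  have lsUL: "lstar \<Omega> U = lstar \<Omega> L"
  proof
    fix x
    have "eventually (\<lambda>y. y \<in> closure \<Omega> \<longrightarrow> ereal (U y) = ereal (L y)) (nhds x)"
      using eqUL by simp
    then have "lsc_env (closure \<Omega>) U x = lsc_env (closure \<Omega>) L x"
      unfolding lsc_env_def by (intro Liminf_eq) (simp add: eventually_inf_principal)
    then show "lstar \<Omega> U x = lstar \<Omega> L x" unfolding lstar_def by simp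
  qed
  have supU: "pde_supersol \<Omega> F g U" unfolding pde_supersol_def lsUL
    using UX conjunct2[OF supL[unfolded pde_supersol_def]] by (rule conjI)
  have lscU: "lsc_on (closure \<Omega>) U" using lscL eqUL unfolding lsc_on_def by simp
  show ?thesis
  proof (intro exI[of _ U] conjI allI impI ballI)
    show "pde_sol \<Omega> F g U" unfolding pde_sol_def using subU supU by blast
  next
    fix w x assume w: "pde_sol \<Omega> F g w" and x: "x \<in> closure \<Omega>"
    have ws: "pde_subsol \<Omega> F g w" and wS: "pde_supersol \<Omega> F g w" using w unfolding pde_sol_def by auto
    have 1: "ustar \<Omega> w x \<le> U x" by (rule SUa[OF ustar_sub(1,2)[OF ws] supU lscU x])
    have 2: "U x \<le> lstar \<Omega> w x" by (rule SUa[OF subU uscU lstar_super(1,2)[OF wS] x])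
    have 3: "w x \<le> ustar \<Omega> w x" using ustar_sub(3)[OF ws x] .
    have 4: "lstar \<Omega> w x \<le> w x" using lstar_super(3)[OF wS x] .
    show "w x = U x" using 1 2 3 4 by linarith
  next
    fix K :: "(real^'n) set" assume K: "compact K \<and> K \<subseteq> closure \<Omega>"
    show "uniform_limit K u U (at_right 0)" unfolding uniform_limit_iff
    proof (intro allI impI)
      fix e :: real assume e: "e > 0"
      have "\<forall>x\<in>K. \<exists>d>0. \<exists>r>0. \<forall>\<rho> y. 0<\<rho> \<longrightarrow> \<rho><d \<longrightarrow> dist y x < r \<longrightarrow> (y \<in> closure \<Omega> \<longrightarrow> dist (u \<rho> y) (U y) < e)"
      proof
        fix x assume xK: "x \<in> K"
        then have xc: "x \<in> closure \<Omega>" using K by blast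
        have e3pos: "e/3 > 0" using e by simp
        obtain d1 e1 where 1: "d1>0" "e1>0" "\<forall>\<rho> y. 0<\<rho> \<longrightarrow> \<rho><d1 \<longrightarrow> dist y x < e1 \<longrightarrow> u \<rho> y < hlim u x + e/3"
          using hl_upper[of u Mu "e/3" x, OF ubnd] e by auto
        obtain d2 e2 where 2: "d2>0" "e2>0" "\<forall>\<rho> y. 0<\<rho> \<longrightarrow> \<rho><d2 \<longrightarrow> dist y x < e2 \<longrightarrow> nu \<rho> y < hlim nu x + e/3"
          using hl_upper[of nu Mu "e/3" x, OF nubnd] e by auto
        obtain e3 where 3: "e3>0" "\<forall>y\<in>closure \<Omega>. dist y x < e3 \<longrightarrow> U y < U x + e/3"
          using uscU xc e3pos unfolding usc_on_def by blast
        obtain e4 where 4: "e4>0" "\<forall>y\<in>closure \<Omega>. dist y x < e4 \<longrightarrow> U y > U x - e/3"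
          using lscU xc e3pos unfolding lsc_on_def by blast
        have "dist (u \<rho> y) (U y) < e" if "0<\<rho>" "\<rho> < min d1 d2" "dist y x < min (min e1 e2) (min e3 e4)" "y \<in> closure \<Omega>" for \<rho> y
        proof -
          have a: "u \<rho> y < U x + e/3" using 1 that unfolding U_def by auto
          have b: "nu \<rho> y < hlim nu x + e/3" using 2 that by auto
          then have b': "u \<rho> y > L x - e/3" unfolding nu_def L_def by simp
          have c: "U y < U x + e/3" "U y > U x - e/3" using 3 4 that by auto
          show ?thesis using a b' c eqUL[OF xc] unfolding dist_real_def by (simp add: abs_less_iff)
        qed
        then show "\<exists>d>0. \<exists>r>0. \<forall>\<rho> y. 0<\<rho> \<longrightarrow> \<rho><d \<longrightarrow> dist y x < r \<longrightarrow> (y \<in> closure \<Omega> \<longrightarrow> dist (u \<rho> y) (U y) < e)"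
          using 1 2 3 4 by (intro exI[of _ "min d1 d2"] conjI exI[of _ "min (min e1 e2) (min e3 e4)"]) auto
      qed
      then obtain d where d: "d>0" "\<forall>\<rho> y. 0<\<rho> \<longrightarrow> \<rho><d \<longrightarrow> y \<in> K \<longrightarrow> (y \<in> closure \<Omega> \<longrightarrow> dist (u \<rho> y) (U y) < e)"
        using compact_unif[of K "\<lambda>\<rho> y. y \<in> closure \<Omega> \<longrightarrow> dist (u \<rho> y) (U y) < e"] K by blast
      show "\<forall>\<^sub>F \<rho> in at_right 0. \<forall>y\<in>K. dist (u \<rho> y) (U y) < e"
        unfolding eventually_at_right_field using d K by (intro exI[of _ d]) auto
    qed
  qed
qed


end
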